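(* Let $\lambda>0$, $c>0$, $0<p<1$, and let $\big(X(t),Y(t)\big)$ be the planar orthogonal random motion described in the context. Then for all real $\alpha$ and $t>0$, \begin{align*}\mathbb{E}\left[e^{i\alpha(X(t)-Y(t))}\,\mathbf{1}_{\{X(t)+Y(t)=ct\}}\right]=\frac{e^{-\lambda t}}{4}&\left[\left(1+\frac{\lambda p}{\sqrt{\lambda^2p^2-\alpha^2c^2}}\right)e^{t\sqrt{\lambda^2p^2-\alpha^2c^2}}\right.\\&\left.+\left(1-\frac{\lambda p}{\sqrt{\lambda^2p^2-\alpha^2c^2}}\right)e^{-t\sqrt{\lambda^2p^2-\alpha^2c^2}}\right].\end{align*}
   Context: Directions: $d_j=\big(\cos(\pi j/2),\sin(\pi j/2)\big)$, $j=0,1,2,3$, indices mod 4. Let $N(t)$ be a homogeneous Poisson process of rate $\lambda$. The direction process $D(t)$ has $D(0)$ uniform on the four directions and changes only at Poisson event times: from a horizontal direction ($d_0,d_2$) it turns counterclockwise ($d_j\to d_{j+1}$) with probability $p$ and clockwise ($d_j\to d_{j-1}$) with probability $1-p$; from a vertical direction ($d_1,d_3$) it turns counterclockwise with probability $1-p$ and clockwise with probability $p$ (independent choices). The position is $\big(X(t),Y(t)\big)=c\int_0^t D(\tau)\,d\tau$ starting from the origin. Square roots are principal branches, understood by continuity where the radicand vanishes. *)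

theory Defs
  imports "HOL-Probability.Probability"
begin

text \<open>A sample is (d0, (tau, u)): d0 is the initial direction index (uniform on {0,1,2,3}),
  tau k (k = 0,1,...) are the i.i.d. exponential(lambda) inter-arrival times of the Poisson
  process N, and u k are i.i.d. Bernoulli(p) coins used at the (k+1)-st Poisson event:
  from a horizontal direction the particle turns counterclockwise iff u k,
  from a vertical direction it turns counterclockwise iff not u k.\<close>

definition orth_space :: "real \<Rightarrow> real \<Rightarrow> (nat \<times> (nat \<Rightarrow> real) \<times> (nat \<Rightarrow> bool)) measure" where
  "orth_space lam p =
     measure_pmf (pmf_of_set {0..<4::nat}) \<Otimes>\<^sub>M
       (PiM UNIV (\<lambda>_. density lborel (exponential_density lam)) \<Otimes>\<^sub>M
        PiM UNIV (\<lambda>_. measure_pmf (bernoulli_pmf p)))"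

definition arrival :: "(nat \<Rightarrow> real) \<Rightarrow> nat \<Rightarrow> real" where
  "arrival tau k = (\<Sum>i<k. tau i)"

definition pcount :: "(nat \<Rightarrow> real) \<Rightarrow> real \<Rightarrow> nat" where
  "pcount tau s = card {k. 1 \<le> k \<and> arrival tau k \<le> s}"

text \<open>Direction index (an integer, read mod 4) after k turns; d_j = (cos(pi j/2), sin(pi j/2)).
  Horizontal directions are those with even index.\<close>
fun dir_index :: "nat \<Rightarrow> (nat \<Rightarrow> bool) \<Rightarrow> nat \<Rightarrow> int" where
  "dir_index d0 u 0 = int d0"
| "dir_index d0 u (Suc k) =
     (let j = dir_index d0 u k;
          ccw = (if even j then u k else \<not> u k)
      in if ccw then j + 1 else j - 1)"

definition Dir :: "nat \<times> (nat \<Rightarrow> real) \<times> (nat \<Rightarrow> bool) \<Rightarrow> real \<Rightarrow> real \<times> real" where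
  "Dir \<omega> s = (let j = dir_index (fst \<omega>) (snd (snd \<omega>)) (pcount (fst (snd \<omega>)) s)
              in (cos (pi * of_int j / 2), sin (pi * of_int j / 2)))"

definition posX :: "real \<Rightarrow> nat \<times> (nat \<Rightarrow> real) \<times> (nat \<Rightarrow> bool) \<Rightarrow> real \<Rightarrow> real" where
  "posX c \<omega> t = c * integral {0..t} (\<lambda>s. fst (Dir \<omega> s))"

definition posY :: "real \<Rightarrow> nat \<times> (nat \<Rightarrow> real) \<times> (nat \<Rightarrow> bool) \<Rightarrow> real \<Rightarrow> real" where
  "posY c \<omega> t = c * integral {0..t} (\<lambda>s. snd (Dir \<omega> s))"

text \<open>The bracket (1 + a/s) e^{ts} + (1 - a/s) e^{-ts}, with s the principal square root;
  at s = 0 it is defined by continuity (limit value 2 + 2 a t).\<close>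
definition bracket :: "real \<Rightarrow> real \<Rightarrow> complex \<Rightarrow> complex" where
  "bracket a t s = (if s = 0 then complex_of_real (2 + 2 * a * t)
     else (1 + complex_of_real a / s) * exp (complex_of_real t * s)
        + (1 - complex_of_real a / s) * exp (- complex_of_real t * s))"

end

theory Submission
  imports Defs
begin


definition turn :: "int \<Rightarrow> bool \<Rightarrow> int" where
  "turn j b = (if (if even j then b else \<not> b) then j + 1 else j - 1)"

fun dirI :: "int \<Rightarrow> (nat \<Rightarrow> bool) \<Rightarrow> nat \<Rightarrow> int" where
  "dirI j u 0 = j"
| "dirI j u (Suc k) = turn (dirI j u k) (u k)"

lemma dir_index_eq: "dir_index d0 u k = dirI (int d0) u k"
  by (induction k) (simp_all add: turn_def Let_def)

lemma dirI_case_nat: "dirI j (case_nat b u') (Suc k) = dirI (turn j b) u' k"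
  by (induction k) simp_all

lemma arrival_case_nat: "arrival (case_nat x tau') (Suc k) = x + arrival tau' k"
  unfolding arrival_def by (subst sum.lessThan_Suc_shift) simp

lemma arrival_0[simp]: "arrival tau 0 = 0"
  unfolding arrival_def by simp

definition goodT :: "(nat \<Rightarrow> real) \<Rightarrow> bool" where
  "goodT tau \<longleftrightarrow> (\<forall>k. tau k > 0) \<and> (\<forall>T. finite {k. arrival tau k \<le> T})"

lemma arrival_nonneg: "(\<forall>k. tau k > 0) \<Longrightarrow> arrival tau k \<ge> 0"
  unfolding arrival_def by (intro sum_nonneg) (auto intro: less_imp_le)

lemma Collect_arrival_case_nat:
  "{k. 1 \<le> k \<and> arrival (case_nat x tau') k \<le> s} = Suc ` {k. arrival tau' k \<le> s - x}"
proof -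
  have "{k. 1 \<le> k \<and> arrival (case_nat x tau') k \<le> s} = Suc ` {k. x + arrival tau' k \<le> s}"
    by (auto simp: image_iff arrival_case_nat Suc_le_eq gr0_conv_Suc)
  then show ?thesis by (simp add: algebra_simps)
qed

lemma pcount_case_nat:
  assumes "x > 0" "goodT tau'"
  shows "pcount (case_nat x tau') s = (if x \<le> s then Suc (pcount tau' (s - x)) else 0)"
proof -
  have fin: "finite {k. arrival tau' k \<le> s - x}" using assms unfolding goodT_def by auto
  have c: "pcount (case_nat x tau') s = card {k. arrival tau' k \<le> s - x}"
    unfolding pcount_def Collect_arrival_case_nat by (simp add: card_image)
  show ?thesis
  proof (cases "x \<le> s")
    case True
    have "{k. arrival tau' k \<le> s - x} = insert 0 {k. 1 \<le> k \<and> arrival tau' k \<le> s - x}"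
      using True by auto
    then have "card {k. arrival tau' k \<le> s - x} = Suc (pcount tau' (s - x))"
      using fin by (simp add: pcount_def)
    then show ?thesis using True c by simp
  next
    case False
    have "arrival tau' k \<ge> 0" for k using arrival_nonneg assms(2) by (auto simp: goodT_def)
    then have "{k. arrival tau' k \<le> s - x} = {}"
      using False by (auto simp: not_le) (smt (verit))
    then show ?thesis using False c by simp
  qed
qed

lemma goodT_case_nat:
  assumes "x > 0" "goodT tau'" shows "goodT (case_nat x tau')"
  unfolding goodT_def
proof safe
  fix k show "case_nat x tau' k > 0" using assms by (cases k) (auto simp: goodT_def)
next
  fix T
  have "{k. arrival (case_nat x tau') k \<le> T} \<subseteq> insert 0 {k. 1 \<le> k \<and> arrival (case_nat x tau') k \<le> T}"
    by auto
  moreover have "finite {k. 1 \<le> k \<and> arrival (case_nat x tau') k \<le> T}"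
    unfolding Collect_arrival_case_nat using assms by (auto simp: goodT_def)
  ultimately show "finite {k. arrival (case_nat x tau') k \<le> T}"
    using finite_subset by blast
qed

lemma goodT_shift: "goodT tau \<Longrightarrow> goodT (\<lambda>n. tau (Suc n))"
  unfolding goodT_def
proof safe
  fix T assume "\<forall>k. tau k > 0" "\<forall>T. finite {k. arrival tau k \<le> T}"
  then have "finite (Suc -` {k. arrival tau k \<le> T + tau 0})" by (intro finite_vimageI) auto
  moreover have "arrival tau (Suc k) = tau 0 + arrival (\<lambda>n. tau (Suc n)) k" for k
    unfolding arrival_def by (subst sum.lessThan_Suc_shift) simp
  ultimately show "finite {k. arrival (\<lambda>n. tau (Suc n)) k \<le> T}"
    by (simp add: vimage_def algebra_simps)
qed auto

definition dvec :: "int \<Rightarrow> real \<times> real" where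
  "dvec d = (cos (pi * of_int d / 2), sin (pi * of_int d / 2))"

lemma dvec_mod: "dvec d = dvec (d mod 4)"
proof -
  have "pi * of_int d / 2 = pi * of_int (d mod 4) / 2 + (2 * pi) * of_int (d div 4)"
  proof -
    have "real_of_int d = of_int (d mod 4) + 4 * of_int (d div 4)"
      by (metis mod_mult_div_eq of_int_add of_int_mult of_int_numeral add.commute)
    then show ?thesis by (simp add: field_simps)
  qed
  then show ?thesis unfolding dvec_def
    by (simp only: cos_add sin_add cos_int_2pin sin_int_2pin) simp
qed

lemma dvec_0: "dvec 0 = (1, 0)" and dvec_1: "dvec 1 = (0, 1)"
  and dvec_2: "dvec 2 = (-1, 0)" and dvec_3: "dvec 3 = (0, -1)"
proof -
  have e: "pi * of_int 3 / 2 = pi / 2 + pi" by simp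
  show "dvec 3 = (0, -1)" unfolding dvec_def e
    by (simp only: cos_periodic_pi sin_periodic_pi) simp
qed (simp_all add: dvec_def)

lemma dvec_cases:
  "dvec d = (if d mod 4 = 0 then (1,0) else if d mod 4 = 1 then (0,1)
             else if d mod 4 = 2 then (-1,0) else (0,-1))"
proof -
  have "d mod 4 \<in> {0,1,2,3}" by auto
  then show ?thesis
    by (subst dvec_mod) (auto simp: dvec_0 dvec_1 dvec_2 dvec_3)
qed

lemma dvec_sum_le: "fst (dvec d) + snd (dvec d) \<le> 1"
  by (simp add: dvec_cases)

lemma dvec_norm_le: "\<bar>fst (dvec d)\<bar> \<le> 1" "\<bar>snd (dvec d)\<bar> \<le> 1"
  by (simp_all add: dvec_cases)

definition DirJ :: "int \<Rightarrow> (nat \<Rightarrow> real) \<times> (nat \<Rightarrow> bool) \<Rightarrow> real \<Rightarrow> real \<times> real" where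
  "DirJ j \<omega> s = dvec (dirI j (snd \<omega>) (pcount (fst \<omega>) s))"

lemma Dir_eq: "Dir \<omega> s = DirJ (int (fst \<omega>)) (snd \<omega>) s"
  unfolding Dir_def DirJ_def dvec_def by (simp add: dir_index_eq Let_def)

lemma DirJ_case_nat:
  assumes "x > 0" "goodT tau'"
  shows "DirJ j (case_nat x tau', case_nat b u') s =
     (if x \<le> s then DirJ (turn j b) (tau', u') (s - x) else dvec j)"
  unfolding DirJ_def using assms by (simp add: pcount_case_nat dirI_case_nat del: dirI.simps(2))


type_synonym sample = "(nat \<Rightarrow> real) \<times> (nat \<Rightarrow> bool)"

definition Pm :: "real \<Rightarrow> real \<Rightarrow> sample measure" where
  "Pm lam p = PiM UNIV (\<lambda>_. density lborel (exponential_density lam)) \<Otimes>\<^sub>M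
              PiM UNIV (\<lambda>_. measure_pmf (bernoulli_pmf p))"

definition Sig :: "sample measure" where
  "Sig = PiM UNIV (\<lambda>_. lborel) \<Otimes>\<^sub>M PiM UNIV (\<lambda>_. count_space UNIV)"

lemma sets_Pm: "sets (Pm lam p) = sets Sig"
  unfolding Pm_def Sig_def
  by (intro sets_pair_measure_cong sets_PiM_cong) (simp_all add: sets_measure_pmf_count_space)

lemma space_Sig: "space Sig = UNIV"
  by (simp add: Sig_def space_pair_measure space_PiM)

lemma measurable_arrival[measurable]:
  assumes [measurable]: "\<And>i. (\<lambda>x. T x i) \<in> borel_measurable M"
  shows "(\<lambda>x. arrival (T x) k) \<in> borel_measurable M"
  unfolding arrival_def by measurable

lemma measurable_pcount[measurable]:
  assumes [measurable]: "\<And>i. (\<lambda>x. T x i) \<in> borel_measurable M"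
    and [measurable]: "S \<in> borel_measurable M"
  shows "(\<lambda>x. pcount (T x) (S x)) \<in> measurable M (count_space UNIV)"
  unfolding pcount_def
  by (rule measurable_card) simp

lemma measurable_turn[measurable]:
  assumes [measurable]: "D \<in> measurable M (count_space UNIV)" "B \<in> measurable M (count_space UNIV)"
  shows "(\<lambda>x. turn (D x) (B x)) \<in> measurable M (count_space UNIV)"
proof -
  have "(\<lambda>x. (\<lambda>d x. turn d (B x)) (D x) x) \<in> measurable M (count_space UNIV)"
    by (rule measurable_compose_countable'[where I=UNIV]) auto
  then show ?thesis by simp
qed

lemma measurable_dirI[measurable]:
  assumes [measurable]: "\<And>i. (\<lambda>x. U x i) \<in> measurable M (count_space UNIV)"
  shows "(\<lambda>x. dirI j (U x) k) \<in> measurable M (count_space UNIV)"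
  by (induction k) simp_all

lemma measurable_DirJ_gen:
  fixes h :: "int \<Rightarrow> 'b::topological_space"
  assumes [measurable]: "\<And>i. (\<lambda>x. T x i) \<in> borel_measurable M"
    "\<And>i. (\<lambda>x. U x i) \<in> measurable M (count_space UNIV)"
    "S \<in> borel_measurable M"
  shows "(\<lambda>x. h (dirI j (U x) (pcount (T x) (S x)))) \<in> borel_measurable M"
proof -
  have f: "(\<lambda>x. h (dirI j (U x) n)) \<in> borel_measurable M" if "n \<in> UNIV" for n
  proof -
    have "(\<lambda>x. dirI j (U x) n) \<in> measurable M (count_space UNIV)" by simp
    from measurable_compose[OF this, of h borel]
    show ?thesis by simp
  qed
  have g: "(\<lambda>x. pcount (T x) (S x)) \<in> measurable M (count_space UNIV)" by simp
  have "(\<lambda>x. (\<lambda>n x. h (dirI j (U x) n)) (pcount (T x) (S x)) x) \<in> borel_measurable M"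
    by (rule measurable_compose_countable'[OF f g countableI_type])
  then show ?thesis by simp
qed

lemma measurable_fDir_s: "(\<lambda>s. fst (DirJ j \<omega> s)) \<in> borel_measurable lborel"
  and measurable_sDir_s: "(\<lambda>s. snd (DirJ j \<omega> s)) \<in> borel_measurable lborel"
  unfolding DirJ_def
  by (rule measurable_DirJ_gen[where T="\<lambda>_. fst \<omega>" and U="\<lambda>_. snd \<omega>" and S="\<lambda>s. s", simplified]; simp)+

lemma hk_leb:
  fixes f :: "real \<Rightarrow> real"
  assumes f: "f \<in> borel_measurable lborel" and B: "\<And>s. \<bar>f s\<bar> \<le> B"
  shows "f integrable_on {a..b}" "integral {a..b} f = (\<integral>s. indicator {a..b} s * f s \<partial>lborel)"
proof -
  have B0: "0 \<le> B" using B[of 0] by simp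
  have "integrable lborel (\<lambda>s. indicator {a..b} s * B :: real)"
    by (intro integrable_mult_left integrable_real_indicator) (simp_all add: emeasure_lborel_Icc_eq)
  then have "set_integrable lborel {a..b} f"
    unfolding set_integrable_def
    by (rule Bochner_Integration.integrable_bound)
       (use f B B0 in \<open>auto simp: indicator_def\<close>)
  from set_borel_integral_eq_integral[OF this]
  show "f integrable_on {a..b}" "integral {a..b} f = (\<integral>s. indicator {a..b} s * f s \<partial>lborel)"
    by (simp_all add: set_lebesgue_integral_def)
qed

definition IX :: "int \<Rightarrow> sample \<Rightarrow> real \<Rightarrow> real" where
  "IX j \<omega> t = integral {0..t} (\<lambda>s. fst (DirJ j \<omega> s))"
definition IY :: "int \<Rightarrow> sample \<Rightarrow> real \<Rightarrow> real" where
  "IY j \<omega> t = integral {0..t} (\<lambda>s. snd (DirJ j \<omega> s))"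

lemma DirJ_bounds: "\<bar>fst (DirJ j \<omega> s)\<bar> \<le> 1" "\<bar>snd (DirJ j \<omega> s)\<bar> \<le> 1"
  unfolding DirJ_def by (simp_all add: dvec_norm_le)

lemma integrable_fstDir: "(\<lambda>s. fst (DirJ j \<omega> s)) integrable_on {a..b}"
  using hk_leb(1)[OF measurable_fDir_s DirJ_bounds(1)] .
lemma integrable_sndDir: "(\<lambda>s. snd (DirJ j \<omega> s)) integrable_on {a..b}"
  using hk_leb(1)[OF measurable_sDir_s DirJ_bounds(2)] .

lemma IX_leb: "IX j \<omega> t = (\<integral>s. indicator {0..t} s * fst (DirJ j \<omega> s) \<partial>lborel)"
  unfolding IX_def using hk_leb(2)[OF measurable_fDir_s DirJ_bounds(1)] .
lemma IY_leb: "IY j \<omega> t = (\<integral>s. indicator {0..t} s * snd (DirJ j \<omega> s) \<partial>lborel)"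
  unfolding IY_def using hk_leb(2)[OF measurable_sDir_s DirJ_bounds(2)] .

lemma measurable_DirJ_3:
  "(\<lambda>x. fst (DirJ j (fst (fst x)) (snd x))) \<in> borel_measurable ((Sig \<Otimes>\<^sub>M (borel::real measure)) \<Otimes>\<^sub>M borel)"
  "(\<lambda>x. snd (DirJ j (fst (fst x)) (snd x))) \<in> borel_measurable ((Sig \<Otimes>\<^sub>M (borel::real measure)) \<Otimes>\<^sub>M borel)"
  unfolding DirJ_def
  by (rule measurable_DirJ_gen[where T="\<lambda>x. fst (fst (fst x))" and U="\<lambda>x. snd (fst (fst x))" and S="snd"];
      simp add: Sig_def)+

lemma measurable_ind3:
  "(\<lambda>x. indicator {0..snd (fst x)::real} (snd x) :: real) \<in> borel_measurable ((Sig \<Otimes>\<^sub>M borel) \<Otimes>\<^sub>M borel)"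
proof -
  let ?M = "(Sig \<Otimes>\<^sub>M (borel::real measure)) \<Otimes>\<^sub>M (borel::real measure)"
  have "{x \<in> space ?M. (0::real) \<le> snd x} \<in> sets ?M"
    by (intro borel_measurable_le measurable_snd measurable_const) simp
  moreover have "{x \<in> space ?M. snd x \<le> (snd (fst x)::real)} \<in> sets ?M"
    by (intro borel_measurable_le measurable_snd measurable_compose[OF measurable_fst])
  ultimately have I: "{x \<in> space ?M. (0::real) \<le> snd x} \<inter> {x \<in> space ?M. snd x \<le> (snd (fst x)::real)} \<in> sets ?M"
    by (rule sets.Int)
  have eq: "{x \<in> space ?M. snd x \<in> {0..snd (fst x)}} = {x \<in> space ?M. (0::real) \<le> snd x} \<inter> {x \<in> space ?M. snd x \<le> (snd (fst x)::real)}"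
    by auto
  show ?thesis by (rule borel_measurable_indicator', subst eq, rule I)
qed

lemma measurable_cis[measurable]: "(\<lambda>x. cis (f x)) \<in> borel_measurable M" if [measurable]: "f \<in> borel_measurable M"
  unfolding cis_conv_exp by measurable

lemma measurable_IX: "(\<lambda>x. IX j (fst x) (snd x)) \<in> borel_measurable (Sig \<Otimes>\<^sub>M borel)"
  and measurable_IY: "(\<lambda>x. IY j (fst x) (snd x)) \<in> borel_measurable (Sig \<Otimes>\<^sub>M borel)"
proof -
  note [measurable] = measurable_DirJ_3 measurable_ind3
  show "(\<lambda>x. IX j (fst x) (snd x)) \<in> borel_measurable (Sig \<Otimes>\<^sub>M borel)"
    unfolding IX_leb
    by (rule lborel.borel_measurable_lebesgue_integral[where f="\<lambda>x s. indicator {0..snd x} s * fst (DirJ j (fst x) s)"]) simp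
  show "(\<lambda>x. IY j (fst x) (snd x)) \<in> borel_measurable (Sig \<Otimes>\<^sub>M borel)"
    unfolding IY_leb
    by (rule lborel.borel_measurable_lebesgue_integral[where f="\<lambda>x s. indicator {0..snd x} s * snd (DirJ j (fst x) s)"]) simp
qed

definition Phi :: "real \<Rightarrow> real \<Rightarrow> int \<Rightarrow> sample \<Rightarrow> real \<Rightarrow> complex" where
  "Phi \<alpha> c j \<omega> t = (if c * IX j \<omega> t + c * IY j \<omega> t = c * t
      then cis (\<alpha> * (c * IX j \<omega> t - c * IY j \<omega> t)) else 0)"

lemma measurable_Phi: "(\<lambda>x. Phi \<alpha> c j (fst x) (snd x)) \<in> borel_measurable (Sig \<Otimes>\<^sub>M borel)"
proof -
  note [measurable] = measurable_IX measurable_IY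
  show ?thesis unfolding Phi_def by measurable
qed

lemma norm_Phi: "norm (Phi \<alpha> c j \<omega> t) \<le> 1"
  unfolding Phi_def by simp

lemma orth_integrand_eq:
  "indicator {\<omega>. posX c \<omega> t + posY c \<omega> t = c * t} \<omega>
              *\<^sub>R cis (\<alpha> * (posX c \<omega> t - posY c \<omega> t))
   = Phi \<alpha> c (int (fst \<omega>)) (snd \<omega>) t"
  unfolding Phi_def posX_def posY_def IX_def IY_def Dir_eq by (simp add: indicator_def)


lemma split_gen:
  fixes h :: "real \<times> real \<Rightarrow> real"
  assumes x: "x > 0" and g: "goodT tau'" and t: "0 \<le> t"
    and int: "\<And>a b. (\<lambda>s. h (DirJ j (case_nat x tau', case_nat b0 u') s)) integrable_on {a..b}"
  shows "integral {0..t} (\<lambda>s. h (DirJ j (case_nat x tau', case_nat b0 u') s)) =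
    (if t < x then t * h (dvec j)
     else x * h (dvec j) + integral {0..t-x} (\<lambda>s. h (DirJ (turn j b0) (tau', u') s)))"
    (is "integral _ ?f = _")
proof (cases "t < x")
  case True
  have "integral {0..t} ?f = integral {0..t} (\<lambda>s. h (dvec j))"
    by (rule integral_cong) (use True in \<open>simp add: DirJ_case_nat[OF x g]\<close>)
  then show ?thesis using True t by simp
next
  case False
  have "integral {0..x} ?f + integral {x..t} ?f = integral {0..t} ?f"
    by (rule Henstock_Kurzweil_Integration.integral_combine) (use False x int in auto)
  then have "integral {0..t} ?f = integral {0..x} ?f + integral {x..t} ?f" by simp
  moreover have "integral {0..x} ?f = integral {0..x} (\<lambda>s. h (dvec j))"
    by (rule integral_spike[of "{x}"]) (auto simp: DirJ_case_nat[OF x g])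
  moreover have "integral {x..t} ?f = integral {0..t-x} (?f \<circ> (+) x)"
    using integral_shift_Icc_real[of 0 "t-x" ?f x] by simp
  moreover have "integral {0..t-x} (?f \<circ> (+) x) = integral {0..t-x} (\<lambda>s. h (DirJ (turn j b0) (tau', u') s))"
    by (rule integral_cong) (auto simp: DirJ_case_nat[OF x g])
  ultimately show ?thesis using False x by simp
qed

lemma IX_case_nat:
  assumes "x > 0" "goodT tau'" "0 \<le> t"
  shows "IX j (case_nat x tau', case_nat b0 u') t =
    (if t < x then t * fst (dvec j) else x * fst (dvec j) + IX (turn j b0) (tau', u') (t - x))"
  unfolding IX_def by (rule split_gen[OF assms integrable_fstDir])

lemma IY_case_nat:
  assumes "x > 0" "goodT tau'" "0 \<le> t"
  shows "IY j (case_nat x tau', case_nat b0 u') t =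
    (if t < x then t * snd (dvec j) else x * snd (dvec j) + IY (turn j b0) (tau', u') (t - x))"
  unfolding IY_def by (rule split_gen[OF assms integrable_sndDir])

lemma IXY_le: "0 \<le> t \<Longrightarrow> IX j \<omega> t + IY j \<omega> t \<le> t"
proof -
  assume t: "0 \<le> t"
  have "IX j \<omega> t + IY j \<omega> t = integral {0..t} (\<lambda>s. fst (DirJ j \<omega> s) + snd (DirJ j \<omega> s))"
    unfolding IX_def IY_def by (rule integral_add[symmetric]) (rule integrable_fstDir integrable_sndDir)+
  also have "\<dots> \<le> integral {0..t} (\<lambda>s. 1)"
  proof (rule integral_le)
    show "(\<lambda>s. fst (DirJ j \<omega> s) + snd (DirJ j \<omega> s)) integrable_on {0..t}"
      by (rule integrable_add) (rule integrable_fstDir integrable_sndDir)+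
  qed (auto simp: DirJ_def dvec_sum_le)
  finally show ?thesis using t by simp
qed

lemma case_nat_shift: "case_nat (f 0) (\<lambda>n. f (Suc n)) = f"
  by (rule ext) (simp split: nat.split)

lemma goodT_pos: "goodT tau \<Longrightarrow> tau k > 0"
  by (simp add: goodT_def)

lemma Phi_case_nat:
  assumes c: "c > 0" and x: "x > 0" and g: "goodT tau'" and t: "0 \<le> t"
    and j: "fst (dvec j) + snd (dvec j) = 1"
  shows "Phi \<alpha> c j (case_nat x tau', case_nat b0 u') t =
    (if t < x then cis (\<alpha> * c * t * (fst (dvec j) - snd (dvec j)))
     else cis (\<alpha> * c * x * (fst (dvec j) - snd (dvec j))) * Phi \<alpha> c (turn j b0) (tau', u') (t - x))"
proof (cases "t < x")
  case True
  have "c * (t * fst (dvec j)) + c * (t * snd (dvec j)) = c * t * (fst (dvec j) + snd (dvec j))"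
    by (simp add: algebra_simps)
  then have "c * (t * fst (dvec j)) + c * (t * snd (dvec j)) = c * t" using j by simp
  then show ?thesis using True
    unfolding Phi_def IX_case_nat[OF x g t] IY_case_nat[OF x g t]
    by (simp add: algebra_simps)
next
  case False
  let ?X = "IX (turn j b0) (tau', u') (t - x)" and ?Y = "IY (turn j b0) (tau', u') (t - x)"
  have e: "(c * (x * fst (dvec j) + ?X) + c * (x * snd (dvec j) + ?Y) = c * t) \<longleftrightarrow>
        (c * ?X + c * ?Y = c * (t - x))"
  proof -
    have "c * (x * fst (dvec j) + ?X) + c * (x * snd (dvec j) + ?Y) = c * x * (fst (dvec j) + snd (dvec j)) + c * (?X + ?Y)"
      by (simp add: algebra_simps)
    also have "\<dots> = c * x + c * (?X + ?Y)" using j by simp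
    finally have L: "c * (x * fst (dvec j) + ?X) + c * (x * snd (dvec j) + ?Y) = c * x + c * (?X + ?Y)" .
    show ?thesis unfolding L by (auto simp: right_diff_distrib distrib_left)
  qed
  have cs: "cis (\<alpha> * (c * (x * fst (dvec j) + ?X) - c * (x * snd (dvec j) + ?Y))) =
      cis (\<alpha> * c * x * (fst (dvec j) - snd (dvec j))) * cis (\<alpha> * (c * ?X - c * ?Y))"
    by (simp add: cis_mult algebra_simps)
  show ?thesis using False
    unfolding Phi_def IX_case_nat[OF x g t] IY_case_nat[OF x g t]
    by (simp only: e cs if_False) simp
qed

lemma Phi_bad:
  assumes c: "c > 0" and g: "goodT tau" and t: "0 < t"
    and j: "fst (dvec j) + snd (dvec j) = -1"
  shows "Phi \<alpha> c j (tau, u) t = 0"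
proof -
  let ?x = "tau 0" and ?tau' = "\<lambda>n. tau (Suc n)" and ?u' = "\<lambda>n. u (Suc n)"
  have x: "?x > 0" using g by (simp add: goodT_def)
  have g': "goodT ?tau'" using goodT_shift[OF g] .
  have eX: "IX j (tau, u) t = IX j (case_nat ?x ?tau', case_nat (u 0) ?u') t"
    by (simp only: case_nat_shift)
  have eY: "IY j (tau, u) t = IY j (case_nat ?x ?tau', case_nat (u 0) ?u') t"
    by (simp only: case_nat_shift)
  have "IX j (tau, u) t + IY j (tau, u) t < t"
  proof (cases "t < ?x")
    case True
    then have "IX j (tau, u) t + IY j (tau, u) t = t * (fst (dvec j) + snd (dvec j))"
      unfolding eX eY IX_case_nat[OF x g' less_imp_le[OF t]] IY_case_nat[OF x g' less_imp_le[OF t]]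
      by (simp add: algebra_simps)
    then show ?thesis using t j by simp
  next
    case False
    have le: "IX (turn j (u 0)) (?tau', ?u') (t - ?x) + IY (turn j (u 0)) (?tau', ?u') (t - ?x) \<le> t - ?x"
      using False by (intro IXY_le) simp
    have "IX j (tau, u) t + IY j (tau, u) t = ?x * (fst (dvec j) + snd (dvec j)) +
       (IX (turn j (u 0)) (?tau', ?u') (t - ?x) + IY (turn j (u 0)) (?tau', ?u') (t - ?x))"
      using False unfolding eX eY IX_case_nat[OF x g' less_imp_le[OF t]] IY_case_nat[OF x g' less_imp_le[OF t]]
      by (simp add: algebra_simps)
    then show ?thesis using j x le by simp
  qed
  then have "c * IX j (tau, u) t + c * IY j (tau, u) t \<noteq> c * t"
    using c by (simp add: distrib_left[symmetric])
  then show ?thesis unfolding Phi_def by simp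
qed


lemma (in prob_space) nn_integral_iter:
  assumes [measurable]: "f \<in> borel_measurable (PiM UNIV (\<lambda>_::nat. M))"
  shows "(\<integral>\<^sup>+\<omega>. f \<omega> \<partial>PiM UNIV (\<lambda>_. M)) = (\<integral>\<^sup>+x. (\<integral>\<^sup>+\<omega>. f (case_nat x \<omega>) \<partial>PiM UNIV (\<lambda>_. M)) \<partial>M)"
proof -
  interpret S: sequence_space M ..
  interpret P: pair_sigma_finite M "\<Pi>\<^sub>M i::nat\<in>UNIV. M" ..
  have "(\<integral>\<^sup>+\<omega>. f \<omega> \<partial>S.S) = (\<integral>\<^sup>+X. f ((\<lambda>(s, \<omega>). case_nat s \<omega>) X) \<partial>(M \<Otimes>\<^sub>M S.S))"
    by (subst S.PiM_iter[symmetric]) (simp add: nn_integral_distr)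
  also have "\<dots> = (\<integral>\<^sup>+x. \<integral>\<^sup>+X. f ((\<lambda>(s, \<omega>). case_nat s \<omega>) (x, X)) \<partial>S.S \<partial>M)"
    by (subst S.nn_integral_fst) simp_all
  finally show ?thesis by simp
qed

lemma (in prob_space) integral_iter:
  fixes f :: "_ \<Rightarrow> 'b::{banach, second_countable_topology}"
  assumes [measurable]: "f \<in> borel_measurable (PiM UNIV (\<lambda>_::nat. M))"
    and bnd: "\<And>\<omega>. norm (f \<omega>) \<le> K"
  shows "(\<integral>\<omega>. f \<omega> \<partial>PiM UNIV (\<lambda>_. M)) = (\<integral>x. (\<integral>\<omega>. f (case_nat x \<omega>) \<partial>PiM UNIV (\<lambda>_. M)) \<partial>M)"
proof -
  interpret S: sequence_space M ..
  interpret P: pair_sigma_finite M "\<Pi>\<^sub>M i::nat\<in>UNIV. M" ..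
  interpret MS: prob_space "M \<Otimes>\<^sub>M S.S" by (rule prob_space_pair) unfold_locales
  have "(\<integral>\<omega>. f \<omega> \<partial>S.S) = (\<integral>X. f ((\<lambda>(s, \<omega>). case_nat s \<omega>) X) \<partial>(M \<Otimes>\<^sub>M S.S))"
    by (subst S.PiM_iter[symmetric]) (simp add: integral_distr)
  also have "\<dots> = (\<integral>x. \<integral>X. f ((\<lambda>(s, \<omega>). case_nat s \<omega>) (x, X)) \<partial>S.S \<partial>M)"
    by (rule P.integral_fst'[symmetric], rule MS.integrable_const_bound[where B=K]) (simp_all add: bnd)
  finally show ?thesis by simp
qed

lemma (in prob_space) norm_integral_le_const:
  fixes f :: "_ \<Rightarrow> 'b::{banach, second_countable_topology}"
  assumes bnd: "\<And>\<omega>. norm (f \<omega>) \<le> K"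
  shows "norm (integral\<^sup>L M f) \<le> K"
proof (cases "integrable M f")
  case True
  have "norm (integral\<^sup>L M f) \<le> (\<integral>x. norm (f x) \<partial>M)" by (rule integral_norm_bound)
  also have "\<dots> \<le> (\<integral>x. K \<partial>M)"
    by (rule integral_mono) (use True bnd in auto)
  finally show ?thesis by (simp add: prob_space)
next
  case False
  have "0 \<le> K" using bnd[of undefined] norm_ge_zero order_trans by blast
  then show ?thesis using False by (simp add: not_integrable_integral_eq)
qed

abbreviation "EE lam \<equiv> density lborel (exponential_density lam)"
abbreviation "SE lam \<equiv> PiM UNIV (\<lambda>_::nat. EE lam)"
abbreviation "BB p \<equiv> measure_pmf (bernoulli_pmf p)"
abbreviation "SB p \<equiv> PiM UNIV (\<lambda>_::nat. BB p)"

lemma Pm_eq: "Pm lam p = SE lam \<Otimes>\<^sub>M SB p" unfolding Pm_def ..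

lemma space_EE[simp]: "space (EE lam) = UNIV" by simp
lemma space_SE[simp]: "space (SE lam) = UNIV" by (simp add: space_PiM)
lemma space_SB[simp]: "space (SB p) = UNIV" by (simp add: space_PiM)
lemma space_Pm[simp]: "space (Pm lam p) = UNIV" by (simp add: Pm_eq space_pair_measure)

lemma Pm_decomp:
  fixes f :: "sample \<Rightarrow> complex"
  assumes lam: "lam > 0" and p: "0 \<le> p" "p \<le> 1"
    and fm: "f \<in> borel_measurable Sig" and bnd: "\<And>\<omega>. norm (f \<omega>) \<le> K"
  shows "(\<integral>\<omega>. f \<omega> \<partial>Pm lam p) =
     p *\<^sub>R (\<integral>x. (\<integral>\<omega>'. f (case_nat x (fst \<omega>'), case_nat True (snd \<omega>')) \<partial>Pm lam p) \<partial>EE lam)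
   + (1 - p) *\<^sub>R (\<integral>x. (\<integral>\<omega>'. f (case_nat x (fst \<omega>'), case_nat False (snd \<omega>')) \<partial>Pm lam p) \<partial>EE lam)"
proof -
  interpret E: prob_space "EE lam" using prob_space_exponential_density[OF lam] .
  interpret SE: sequence_space "EE lam" ..
  interpret SB: sequence_space "BB p" ..
  interpret P: pair_sigma_finite "SE lam" "SB p" ..
  interpret PP: prob_space "SE lam \<Otimes>\<^sub>M SB p" by (rule prob_space_pair) unfold_locales
  have sets_eq: "sets (SE lam \<Otimes>\<^sub>M SB p) = sets Sig" using sets_Pm[of lam p] by (simp add: Pm_eq)
  have f[measurable]: "f \<in> borel_measurable (SE lam \<Otimes>\<^sub>M SB p)"
    using fm by (simp add: measurable_cong_sets[OF sets_eq refl])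
  define A where "A = (\<lambda>\<tau> b. \<integral>\<upsilon>. f (\<tau>, case_nat b \<upsilon>) \<partial>SB p)"
  have A_m[measurable]: "(\<lambda>\<tau>. A \<tau> b) \<in> borel_measurable (SE lam)" for b
    unfolding A_def by measurable
  have A_b: "norm (A \<tau> b) \<le> K" for \<tau> b
    unfolding A_def by (rule SB.norm_integral_le_const) (rule bnd)
  have A_int: "integrable (SE lam) (\<lambda>\<tau>. A \<tau> b)" for b
    by (rule SE.integrable_const_bound[where B=K]) (simp_all add: A_b)
  have Aeq: "(\<integral>\<tau>. A \<tau> b \<partial>SE lam) =
     (\<integral>x. (\<integral>\<omega>'. f (case_nat x (fst \<omega>'), case_nat b (snd \<omega>')) \<partial>Pm lam p) \<partial>EE lam)" for b
  proof -
    have "(\<integral>\<tau>. A \<tau> b \<partial>SE lam) = (\<integral>x. (\<integral>\<tau>'. A (case_nat x \<tau>') b \<partial>SE lam) \<partial>EE lam)"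
      by (rule E.integral_iter[where K=K]) (simp_all add: A_b)
    also have "\<dots> = (\<integral>x. (\<integral>\<omega>'. f (case_nat x (fst \<omega>'), case_nat b (snd \<omega>')) \<partial>Pm lam p) \<partial>EE lam)"
    proof (rule Bochner_Integration.integral_cong[OF refl])
      fix x :: real
      show "(\<integral>\<tau>'. A (case_nat x \<tau>') b \<partial>SE lam) = (\<integral>\<omega>'. f (case_nat x (fst \<omega>'), case_nat b (snd \<omega>')) \<partial>Pm lam p)"
        unfolding A_def Pm_eq
        by (rule P.integral_fst'[where f="\<lambda>\<omega>'. f (case_nat x (fst \<omega>'), case_nat b (snd \<omega>'))", simplified],
            rule PP.integrable_const_bound[where B=K]) (simp_all add: bnd)
    qed
    finally show ?thesis .
  qed
  have "(\<integral>\<omega>. f \<omega> \<partial>Pm lam p) = (\<integral>\<tau>. \<integral>\<upsilon>. f (\<tau>, \<upsilon>) \<partial>SB p \<partial>SE lam)"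
    unfolding Pm_eq
    by (rule P.integral_fst'[symmetric], rule PP.integrable_const_bound[where B=K]) (simp_all add: bnd)
  also have "\<dots> = (\<integral>\<tau>. p *\<^sub>R A \<tau> True + (1 - p) *\<^sub>R A \<tau> False \<partial>SE lam)"
  proof (rule Bochner_Integration.integral_cong[OF refl])
    fix \<tau> :: "nat \<Rightarrow> real"
    have "(\<integral>\<upsilon>. f (\<tau>, \<upsilon>) \<partial>SB p) = (\<integral>b. A \<tau> b \<partial>BB p)"
      unfolding A_def by (rule measure_pmf.integral_iter[where K=K]) (simp_all add: bnd)
    also have "\<dots> = (\<Sum>b\<in>{True, False}. pmf (bernoulli_pmf p) b *\<^sub>R A \<tau> b)"
      by (rule integral_measure_pmf) auto
    also have "\<dots> = p *\<^sub>R A \<tau> True + (1 - p) *\<^sub>R A \<tau> False"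
      using p by simp
    finally show "(\<integral>\<upsilon>. f (\<tau>, \<upsilon>) \<partial>SB p) = p *\<^sub>R A \<tau> True + (1 - p) *\<^sub>R A \<tau> False" .
  qed
  also have "\<dots> = p *\<^sub>R (\<integral>\<tau>. A \<tau> True \<partial>SE lam) + (1 - p) *\<^sub>R (\<integral>\<tau>. A \<tau> False \<partial>SE lam)"
    using A_int by simp
  also have "\<dots> = p *\<^sub>R (\<integral>x. (\<integral>\<omega>'. f (case_nat x (fst \<omega>'), case_nat True (snd \<omega>')) \<partial>Pm lam p) \<partial>EE lam)
   + (1 - p) *\<^sub>R (\<integral>x. (\<integral>\<omega>'. f (case_nat x (fst \<omega>'), case_nat False (snd \<omega>')) \<partial>Pm lam p) \<partial>EE lam)"
    by (simp only: Aeq)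
  finally show ?thesis .
qed


lemma AE_EE_pos: "lam > 0 \<Longrightarrow> AE x in EE lam. x > 0"
proof -
  have "AE x in lborel. (x::real) \<noteq> 0" by (rule AE_lborel_singleton)
  then have "AE x in lborel. 0 < ennreal (exponential_density lam x) \<longrightarrow> x > 0"
    by eventually_elim (auto simp: exponential_density_def)
  then show ?thesis by (subst AE_density) simp_all
qed

lemma AE_EE_ne: "AE x in EE lam. x \<noteq> t"
proof -
  have "AE x in lborel. (x::real) \<noteq> t" by (rule AE_lborel_singleton)
  then have "AE x in lborel. 0 < ennreal (exponential_density lam x) \<longrightarrow> x \<noteq> t"
    by eventually_elim auto
  then show ?thesis by (subst AE_density) simp_all
qed

lemma AE_SE_pos:
  assumes lam: "lam > 0" shows "AE \<tau> in SE lam. \<forall>k. \<tau> k > 0"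
proof -
  interpret E: prob_space "EE lam" using prob_space_exponential_density[OF lam] .
  interpret SE: sequence_space "EE lam" ..
  have "AE \<tau> in SE lam. \<tau> k > 0" for k
  proof -
    have "AE x in distr (SE lam) (EE lam) (\<lambda>\<tau>. \<tau> k). x > 0"
      by (subst distr_PiM_component) (simp_all add: AE_EE_pos[OF lam] E.prob_space_axioms)
    then show ?thesis by (subst (asm) AE_distr_iff) simp_all
  qed
  then show ?thesis by (simp add: AE_all_countable)
qed

lemma EE_exp_moment:
  assumes lam: "lam > 0"
  shows "(\<integral>\<^sup>+x. ennreal (exp (- x)) \<partial>EE lam) = ennreal (lam / (lam + 1))"
proof -
  interpret E1: prob_space "EE (lam + 1)" using prob_space_exponential_density lam by simp
  have "(\<integral>\<^sup>+x. ennreal (exp (- x)) \<partial>EE lam) =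
      (\<integral>\<^sup>+x. ennreal (exponential_density lam x) * ennreal (exp (- x)) \<partial>lborel)"
    by (subst nn_integral_density) simp_all
  also have "\<dots> = (\<integral>\<^sup>+x. ennreal (lam / (lam + 1)) * ennreal (exponential_density (lam + 1) x) \<partial>lborel)"
  proof (rule nn_integral_cong)
    fix x :: real
    have "exponential_density lam x * exp (- x) = lam / (lam + 1) * exponential_density (lam + 1) x"
      using lam by (auto simp: exponential_density_def field_simps exp_add[symmetric] exp_minus_inverse)
    then show "ennreal (exponential_density lam x) * ennreal (exp (- x)) =
        ennreal (lam / (lam + 1)) * ennreal (exponential_density (lam + 1) x)"
      using lam by (simp add: ennreal_mult'[symmetric] ennreal_mult[symmetric] exponential_density_nonneg)
  qed
  also have "\<dots> = ennreal (lam / (lam + 1)) * (\<integral>\<^sup>+x. ennreal (exponential_density (lam + 1) x) \<partial>lborel)"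
    by (rule nn_integral_cmult) simp
  also have "(\<integral>\<^sup>+x. ennreal (exponential_density (lam + 1) x) \<partial>lborel) = 1"
  proof -
    have "emeasure (EE (lam + 1)) UNIV = 1" using E1.emeasure_space_1 by simp
    then show ?thesis by (subst (asm) emeasure_density) simp_all
  qed
  finally show ?thesis by simp
qed

lemma SE_arrival_moment:
  assumes lam: "lam > 0"
  shows "(\<integral>\<^sup>+\<tau>. ennreal (exp (- arrival \<tau> k)) \<partial>SE lam) = ennreal ((lam / (lam + 1)) ^ k)"
proof (induction k)
  case 0
  interpret E: prob_space "EE lam" using prob_space_exponential_density[OF lam] .
  interpret SE: sequence_space "EE lam" ..
  show ?case using SE.emeasure_space_1 by (simp add: space_PiM)
next
  case (Suc k)
  interpret E: prob_space "EE lam" using prob_space_exponential_density[OF lam] .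
  interpret SE: sequence_space "EE lam" ..
  have m: "(\<lambda>\<tau>. arrival \<tau> k) \<in> borel_measurable (SE lam)" for k
    by (rule measurable_arrival) simp
  have "(\<integral>\<^sup>+\<tau>. ennreal (exp (- arrival \<tau> (Suc k))) \<partial>SE lam) =
     (\<integral>\<^sup>+x. (\<integral>\<^sup>+\<tau>. ennreal (exp (- arrival (case_nat x \<tau>) (Suc k))) \<partial>SE lam) \<partial>EE lam)"
    by (rule E.nn_integral_iter) (use m in measurable)
  also have "\<dots> = (\<integral>\<^sup>+x. ennreal (exp (- x)) * (\<integral>\<^sup>+\<tau>. ennreal (exp (- arrival \<tau> k)) \<partial>SE lam) \<partial>EE lam)"
  proof (rule nn_integral_cong)
    fix x :: real
    have "(\<integral>\<^sup>+\<tau>. ennreal (exp (- arrival (case_nat x \<tau>) (Suc k))) \<partial>SE lam) =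
       (\<integral>\<^sup>+\<tau>. ennreal (exp (- x)) * ennreal (exp (- arrival \<tau> k)) \<partial>SE lam)"
      by (rule nn_integral_cong) (simp add: arrival_case_nat ennreal_mult[symmetric] exp_add[symmetric])
    also have "\<dots> = ennreal (exp (- x)) * (\<integral>\<^sup>+\<tau>. ennreal (exp (- arrival \<tau> k)) \<partial>SE lam)"
      by (rule nn_integral_cmult) (use m in measurable)
    finally show "(\<integral>\<^sup>+\<tau>. ennreal (exp (- arrival (case_nat x \<tau>) (Suc k))) \<partial>SE lam) =
       ennreal (exp (- x)) * (\<integral>\<^sup>+\<tau>. ennreal (exp (- arrival \<tau> k)) \<partial>SE lam)" .
  qed
  also have "\<dots> = (\<integral>\<^sup>+x. ennreal (exp (- x)) \<partial>EE lam) * ennreal ((lam / (lam + 1)) ^ k)"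
    unfolding Suc by (rule nn_integral_multc) simp
  also have "\<dots> = ennreal ((lam / (lam + 1)) ^ Suc k)"
    using lam by (simp add: EE_exp_moment ennreal_mult[symmetric])
  finally show ?case .
qed

lemma AE_SE_unbounded:
  assumes lam: "lam > 0" shows "AE \<tau> in SE lam. \<exists>k. arrival \<tau> k > real n"
proof -
  interpret E: prob_space "EE lam" using prob_space_exponential_density[OF lam] .
  interpret SE: sequence_space "EE lam" ..
  have m[measurable]: "(\<lambda>\<tau>. arrival \<tau> k) \<in> borel_measurable (SE lam)" for k
    by (rule measurable_arrival) simp
  define Z where "Z = {\<tau>. \<forall>k. arrival \<tau> k \<le> real n}"
  have Zm: "Z \<in> sets (SE lam)"
  proof -
    have "{\<tau> \<in> space (SE lam). \<forall>k. arrival \<tau> k \<le> real n} \<in> sets (SE lam)" by measurable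
    then show ?thesis by (simp add: Z_def)
  qed
  define r where "r = lam / (lam + 1)"
  have r: "0 \<le> r" "r < 1" using lam by (auto simp: r_def)
  have bound: "measure (SE lam) Z \<le> exp (real n) * r ^ k" for k
  proof -
    have "emeasure (SE lam) Z = (\<integral>\<^sup>+\<tau>. indicator Z \<tau> \<partial>SE lam)" using Zm by simp
    also have "\<dots> \<le> (\<integral>\<^sup>+\<tau>. ennreal (exp (real n)) * ennreal (exp (- arrival \<tau> k)) \<partial>SE lam)"
    proof (rule nn_integral_mono)
      fix \<tau> :: "nat \<Rightarrow> real"
      show "indicator Z \<tau> \<le> ennreal (exp (real n)) * ennreal (exp (- arrival \<tau> k))"
      proof (cases "\<tau> \<in> Z")
        case True
        then have "arrival \<tau> k \<le> real n" by (simp add: Z_def)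
        then have "1 \<le> exp (real n - arrival \<tau> k)" by simp
        then show ?thesis using True by (simp add: ennreal_mult[symmetric] exp_diff exp_minus field_simps)
      qed simp
    qed
    also have "\<dots> = ennreal (exp (real n)) * ennreal (r ^ k)"
      by (subst nn_integral_cmult) (simp_all add: SE_arrival_moment[OF lam] r_def)
    finally have "ennreal (measure (SE lam) Z) \<le> ennreal (exp (real n) * r ^ k)"
      by (simp add: SE.emeasure_eq_measure ennreal_mult[symmetric] r)
    then show ?thesis using r by (simp add: ennreal_le_iff)
  qed
  have lim: "(\<lambda>k. exp (real n) * r ^ k) \<longlonglongrightarrow> 0"
    by (rule tendsto_mult_right_zero, rule LIMSEQ_power_zero) (use r in simp)
  have "measure (SE lam) Z \<le> 0"
    by (rule LIMSEQ_le_const[OF lim]) (use bound in auto)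
  then have "Z \<in> null_sets (SE lam)"
    using Zm by (simp add: SE.emeasure_eq_measure null_sets_def measure_nonneg antisym)
  then show ?thesis
    by (rule AE_I') (auto simp: Z_def not_less)
qed

definition goodT' :: "(nat \<Rightarrow> real) \<Rightarrow> bool" where
  "goodT' \<tau> \<longleftrightarrow> (\<forall>k. \<tau> k > 0) \<and> (\<forall>n::nat. \<exists>k. arrival \<tau> k > real n)"

lemma arrival_mono: "(\<forall>k. \<tau> k > 0) \<Longrightarrow> k \<le> k' \<Longrightarrow> arrival \<tau> k \<le> arrival \<tau> k'"
  unfolding arrival_def by (rule sum_mono2) (auto intro: less_imp_le)

lemma goodT'_goodT: "goodT' \<tau> \<Longrightarrow> goodT \<tau>"
  unfolding goodT_def
proof safe
  fix T assume g: "goodT' \<tau>"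
  obtain n :: nat where n: "T \<le> real n" using real_arch_simple by blast
  obtain k0 where k0: "arrival \<tau> k0 > real n" using g by (auto simp: goodT'_def)
  have "{k. arrival \<tau> k \<le> T} \<subseteq> {..<k0}"
  proof
    fix k assume "k \<in> {k. arrival \<tau> k \<le> T}"
    then have "arrival \<tau> k \<le> T" by simp
    moreover have "k0 \<le> k \<Longrightarrow> arrival \<tau> k0 \<le> arrival \<tau> k"
      using g by (intro arrival_mono) (auto simp: goodT'_def)
    ultimately show "k \<in> {..<k0}" using k0 n by force
  qed
  then show "finite {k. arrival \<tau> k \<le> T}" using finite_subset by blast
qed (simp add: goodT'_def)

lemma AE_Pm_goodT:
  assumes lam: "lam > 0" shows "AE \<omega> in Pm lam p. goodT (fst \<omega>)"
proof -
  interpret E: prob_space "EE lam" using prob_space_exponential_density[OF lam] .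
  interpret SE: sequence_space "EE lam" ..
  interpret SB: sequence_space "BB p" ..
  interpret P: pair_sigma_finite "SE lam" "SB p" ..
  have m[measurable]: "(\<lambda>\<tau>. arrival \<tau> k) \<in> borel_measurable (SE lam)" for k
    by (rule measurable_arrival) simp
  have mc[measurable]: "(\<lambda>\<tau>. \<tau> k) \<in> borel_measurable (SE lam)" for k
    by simp
  have "AE \<tau> in SE lam. goodT' \<tau>"
    using AE_SE_pos[OF lam] AE_SE_unbounded[OF lam] unfolding goodT'_def
    by (simp add: AE_all_countable)
  then obtain N where N: "N \<in> null_sets (SE lam)" "{\<tau>. \<not> goodT' \<tau>} \<subseteq> N"
    by (auto simp: eventually_ae_filter)
  have sf: "sigma_finite_measure (SB p)"
    by (rule prob_space_imp_sigma_finite, rule prob_space_PiM, rule prob_space_measure_pmf)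
  have e: "emeasure (SE lam \<Otimes>\<^sub>M SB p) (N \<times> space (SB p)) = emeasure (SE lam) N * emeasure (SB p) (space (SB p))"
    by (rule sigma_finite_measure.emeasure_pair_measure_Times[OF sf]) (use N in auto, metis sets.top space_SB)
  have "N \<times> space (SB p) \<in> sets (SE lam \<Otimes>\<^sub>M SB p)"
    using N(1) by (intro pair_measureI) (auto, metis sets.top space_SB)
  then have "N \<times> space (SB p) \<in> null_sets (SE lam \<Otimes>\<^sub>M SB p)"
    using N(1) e by (simp only: null_sets_def mem_Collect_eq) simp
  then have "AE \<omega> in SE lam \<Otimes>\<^sub>M SB p. goodT' (fst \<omega>)"
    by (rule AE_I') (use N(2) in auto)
  then show ?thesis unfolding Pm_eq by eventually_elim (rule goodT'_goodT)
qed


definition Fj :: "real \<Rightarrow> real \<Rightarrow> real \<Rightarrow> real \<Rightarrow> int \<Rightarrow> real \<Rightarrow> complex" where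
  "Fj \<alpha> c lam p j t = (\<integral>\<omega>. Phi \<alpha> c j \<omega> t \<partial>Pm lam p)"

lemma prob_space_Pm: "lam > 0 \<Longrightarrow> prob_space (Pm lam p)"
  unfolding Pm_eq
  by (intro prob_space_pair prob_space_PiM prob_space_exponential_density prob_space_measure_pmf)

lemma measurable_Phi_Pm:
  "(\<lambda>\<omega>. Phi \<alpha> c j \<omega> t) \<in> borel_measurable (Pm lam p)"
proof -
  have "(\<lambda>\<omega>. (\<lambda>x. Phi \<alpha> c j (fst x) (snd x)) (\<omega>, t)) \<in> borel_measurable Sig"
    by (rule measurable_compose[OF _ measurable_Phi]) simp
  then show ?thesis by (simp add: measurable_cong_sets[OF sets_Pm refl])
qed

lemma measurable_Phi_Sig:
  "(\<lambda>\<omega>. Phi \<alpha> c j \<omega> t) \<in> borel_measurable Sig"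
proof -
  have "(\<lambda>\<omega>. (\<lambda>x. Phi \<alpha> c j (fst x) (snd x)) (\<omega>, t)) \<in> borel_measurable Sig"
    by (rule measurable_compose[OF _ measurable_Phi]) simp
  then show ?thesis by simp
qed

lemma measurable_Fj: "lam > 0 \<Longrightarrow> (\<lambda>t. Fj \<alpha> c lam p j t) \<in> borel_measurable borel"
proof -
  assume lam: "lam > 0"
  interpret P: prob_space "Pm lam p" by (rule prob_space_Pm[OF lam])
  have "(\<lambda>x. Phi \<alpha> c j (fst x) (snd x)) \<in> borel_measurable (Sig \<Otimes>\<^sub>M borel)" by (rule measurable_Phi)
  then have "(\<lambda>(t, \<omega>). Phi \<alpha> c j \<omega> t) \<in> borel_measurable (borel \<Otimes>\<^sub>M Sig)"
    by (subst (asm) measurable_pair_swap_iff) (simp add: case_prod_beta)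
  moreover have se: "sets ((borel::real measure) \<Otimes>\<^sub>M Pm lam p) = sets ((borel::real measure) \<Otimes>\<^sub>M Sig)"
    by (rule sets_pair_measure_cong) (simp_all add: sets_Pm)
  ultimately have "(\<lambda>(t, \<omega>). Phi \<alpha> c j \<omega> t) \<in> borel_measurable ((borel::real measure) \<Otimes>\<^sub>M Pm lam p)"
    by (subst measurable_cong_sets[OF se refl])
  then show ?thesis unfolding Fj_def
    by (rule P.borel_measurable_lebesgue_integral[where f="\<lambda>t \<omega>. Phi \<alpha> c j \<omega> t"])
qed

lemma norm_Fj: "lam > 0 \<Longrightarrow> norm (Fj \<alpha> c lam p j t) \<le> 1"
  unfolding Fj_def by (rule prob_space.norm_integral_le_const[OF prob_space_Pm]) (simp_all add: norm_Phi)

lemma Fj_bad: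
  assumes c: "c > 0" and lam: "lam > 0" and t: "t > 0" and j: "fst (dvec j) + snd (dvec j) = -1"
  shows "Fj \<alpha> c lam p j t = 0"
proof -
  have "Fj \<alpha> c lam p j t = (\<integral>\<omega>. 0 \<partial>Pm lam p)"
    unfolding Fj_def
  proof (rule integral_cong_AE)
    show "AE \<omega> in Pm lam p. Phi \<alpha> c j \<omega> t = 0"
      using AE_Pm_goodT[OF lam]
    proof eventually_elim
      fix \<omega> :: sample assume g: "goodT (fst \<omega>)"
      obtain a b where ab: "\<omega> = (a, b)" by fastforce
      show "Phi \<alpha> c j \<omega> t = 0" using g unfolding ab by (simp add: Phi_bad[OF c _ t j])
    qed
  qed (simp_all add: measurable_Phi_Pm)
  then show ?thesis by simp
qed

lemma measure_EE_gt:
  assumes lam: "lam > 0" and t: "0 \<le> t"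
  shows "measure (EE lam) {t<..} = exp (- lam * t)"
proof -
  interpret E: prob_space "EE lam" using prob_space_exponential_density[OF lam] .
  have "emeasure (EE lam) {..t} = ennreal (1 - exp (- lam * t))"
    using emeasure_erlang_density[OF lam, of 0 t] t by (simp add: erlang_CDF_0)
  then have m: "measure (EE lam) {..t} = 1 - exp (- lam * t)"
    using t lam by (simp add: E.emeasure_eq_measure)
  have "measure (EE lam) (space (EE lam) - {..t}) = 1 - measure (EE lam) {..t}"
    by (rule E.prob_compl) simp
  moreover have "space (EE lam) - {..t} = {t<..}" by auto
  ultimately show ?thesis using m by simp
qed

lemma measurable_shiftmap:
  "(\<lambda>z. (case_nat (fst z) (fst (snd z)), case_nat b (snd (snd z)))) \<in> measurable ((borel::real measure) \<Otimes>\<^sub>M Sig) Sig"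
  unfolding Sig_def by measurable

lemma measurable_Q:
  assumes lam: "lam > 0"
  shows "(\<lambda>x. \<integral>\<omega>'. Phi \<alpha> c j (case_nat x (fst \<omega>'), case_nat b (snd \<omega>')) t \<partial>Pm lam p) \<in> borel_measurable (EE lam)"
proof -
  interpret P: prob_space "Pm lam p" by (rule prob_space_Pm[OF lam])
  have "(\<lambda>z. Phi \<alpha> c j (case_nat (fst z) (fst (snd z)), case_nat b (snd (snd z))) t) \<in> borel_measurable ((borel::real measure) \<Otimes>\<^sub>M Sig)"
    by (rule measurable_compose[OF measurable_shiftmap measurable_Phi_Sig])
  moreover have se: "sets (EE lam \<Otimes>\<^sub>M Pm lam p) = sets ((borel::real measure) \<Otimes>\<^sub>M Sig)"
    by (rule sets_pair_measure_cong) (simp_all add: sets_Pm)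
  ultimately have "(\<lambda>z. Phi \<alpha> c j (case_nat (fst z) (fst (snd z)), case_nat b (snd (snd z))) t) \<in> borel_measurable (EE lam \<Otimes>\<^sub>M Pm lam p)"
    by (subst measurable_cong_sets[OF se refl])
  then have "(\<lambda>(x, \<omega>'). Phi \<alpha> c j (case_nat x (fst \<omega>'), case_nat b (snd \<omega>')) t) \<in> borel_measurable (EE lam \<Otimes>\<^sub>M Pm lam p)"
    by (simp add: case_prod_beta)
  then show ?thesis
    by (rule P.borel_measurable_lebesgue_integral[where f="\<lambda>x \<omega>'. Phi \<alpha> c j (case_nat x (fst \<omega>'), case_nat b (snd \<omega>')) t"])
qed

lemma Fj_rec:
  assumes c: "c > 0" and lam: "lam > 0" and p0: "0 \<le> p" and p1: "p \<le> 1" and t: "0 \<le> t"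
    and hj: "fst (dvec j) + snd (dvec j) = 1"
    and hF: "fst (dvec (turn j False)) + snd (dvec (turn j False)) = -1"
  shows "Fj \<alpha> c lam p j t = exp (- lam * t) *\<^sub>R cis (\<alpha> * c * t * (fst (dvec j) - snd (dvec j)))
     + p *\<^sub>R (\<integral>x. indicator {..t} x *\<^sub>R (cis (\<alpha> * c * x * (fst (dvec j) - snd (dvec j))) * Fj \<alpha> c lam p (turn j True) (t - x)) \<partial>EE lam)"
proof -
  interpret E: prob_space "EE lam" using prob_space_exponential_density[OF lam] .
  interpret P: prob_space "Pm lam p" by (rule prob_space_Pm[OF lam])
  define e where "e = fst (dvec j) - snd (dvec j)"
  define K where "K = cis (\<alpha> * c * t * e)"
  define G where "G = (\<lambda>x. cis (\<alpha> * c * x * e) * Fj \<alpha> c lam p (turn j True) (t - x))"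
  define Q where "Q = (\<lambda>b x. \<integral>\<omega>'. Phi \<alpha> c j (case_nat x (fst \<omega>'), case_nat b (snd \<omega>')) t \<partial>Pm lam p)"
  have Gm[measurable]: "G \<in> borel_measurable (EE lam)"
  proof -
    have "(\<lambda>x::real. t - x) \<in> borel_measurable borel" by simp
    from measurable_compose[OF this measurable_Fj[OF lam]]
    have "(\<lambda>x. Fj \<alpha> c lam p (turn j True) (t - x)) \<in> borel_measurable borel" .
    then have "G \<in> borel_measurable borel" unfolding G_def by measurable
    moreover have se: "sets (EE lam) = sets (borel::real measure)" by simp
    ultimately show ?thesis by (subst measurable_cong_sets[OF se refl])
  qed
  have Gb: "norm (G x) \<le> 1" for x
    unfolding G_def using norm_Fj[OF lam] by (simp add: norm_mult)
  have Qm: "Q b \<in> borel_measurable (EE lam)" for b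
    unfolding Q_def by (rule measurable_Q[OF lam])
  have Qeq: "Q b x = (if t < x then K else cis (\<alpha> * c * x * e) * Fj \<alpha> c lam p (turn j b) (t - x))"
    if x: "x > 0" for b x
  proof -
    have "Q b x = (\<integral>\<omega>'. (if t < x then K else cis (\<alpha> * c * x * e) * Phi \<alpha> c (turn j b) \<omega>' (t - x)) \<partial>Pm lam p)"
      unfolding Q_def
    proof (rule integral_cong_AE)
      show "AE \<omega>' in Pm lam p. Phi \<alpha> c j (case_nat x (fst \<omega>'), case_nat b (snd \<omega>')) t =
          (if t < x then K else cis (\<alpha> * c * x * e) * Phi \<alpha> c (turn j b) \<omega>' (t - x))"
        using AE_Pm_goodT[OF lam]
      proof eventually_elim
        fix \<omega>' :: sample assume g: "goodT (fst \<omega>')"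
        show "Phi \<alpha> c j (case_nat x (fst \<omega>'), case_nat b (snd \<omega>')) t =
          (if t < x then K else cis (\<alpha> * c * x * e) * Phi \<alpha> c (turn j b) \<omega>' (t - x))"
          using Phi_case_nat[OF c x g t hj, of \<alpha> b "snd \<omega>'"] unfolding K_def e_def
          by (simp add: mult.assoc)
      qed
    next
      show "(\<lambda>\<omega>'. Phi \<alpha> c j (case_nat x (fst \<omega>'), case_nat b (snd \<omega>')) t) \<in> borel_measurable (Pm lam p)"
      proof -
        have "(\<lambda>\<omega>'. (\<lambda>z. Phi \<alpha> c j (case_nat (fst z) (fst (snd z)), case_nat b (snd (snd z))) t) (x, \<omega>')) \<in> borel_measurable Sig"
          by (rule measurable_compose[OF _ measurable_compose[OF measurable_shiftmap measurable_Phi_Sig]]) simp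
        then show ?thesis by (simp add: measurable_cong_sets[OF sets_Pm refl])
      qed
    next
      show "(\<lambda>\<omega>'. if t < x then K else cis (\<alpha> * c * x * e) * Phi \<alpha> c (turn j b) \<omega>' (t - x)) \<in> borel_measurable (Pm lam p)"
        using measurable_Phi_Pm by simp
    qed
    also have "\<dots> = (if t < x then K else cis (\<alpha> * c * x * e) * Fj \<alpha> c lam p (turn j b) (t - x))"
      by (simp add: Fj_def P.prob_space[unfolded space_Pm])
    finally show ?thesis .
  qed
  have QT: "AE x in EE lam. Q True x = indicator {t<..} x *\<^sub>R K + indicator {..t} x *\<^sub>R G x"
    using AE_EE_pos[OF lam]
  proof eventually_elim
    fix x :: real assume "x > 0"
    then show "Q True x = indicator {t<..} x *\<^sub>R K + indicator {..t} x *\<^sub>R G x"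
      by (simp add: Qeq G_def indicator_def)
  qed
  have QF: "AE x in EE lam. Q False x = indicator {t<..} x *\<^sub>R K"
    using AE_EE_pos[OF lam] AE_EE_ne[where lam=lam and t=t]
  proof eventually_elim
    fix x :: real assume x: "x > 0" "x \<noteq> t"
    show "Q False x = indicator {t<..} x *\<^sub>R K"
    proof (cases "t < x")
      case False
      then have "t - x > 0" using x by simp
      then show ?thesis using False x by (simp add: Qeq Fj_bad[OF c lam _ hF])
    qed (simp add: Qeq x)
  qed
  have iK: "integrable (EE lam) (\<lambda>x. indicator {t<..} x *\<^sub>R K)"
    by (rule E.integrable_const_bound[where B="norm K"]) (auto simp: indicator_def)
  have iG: "integrable (EE lam) (\<lambda>x. indicator {..t} x *\<^sub>R G x)"
    by (rule E.integrable_const_bound[where B=1]) (auto simp: indicator_def Gb)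
  have intK: "(\<integral>x. indicator {t<..} x *\<^sub>R K \<partial>EE lam) = exp (- lam * t) *\<^sub>R K"
  proof -
    have ii: "integrable (EE lam) (indicator {t<..} :: real \<Rightarrow> real)"
      by (rule E.integrable_const_bound[where B=1]) (auto simp: indicator_def)
    have "(\<integral>x. indicator {t<..} x *\<^sub>R K \<partial>EE lam) = (\<integral>x. indicator {t<..} x \<partial>EE lam) *\<^sub>R K"
      using ii by (rule integral_scaleR_left)
    also have "(\<integral>x. indicator {t<..} x \<partial>EE lam) = measure (EE lam) {t<..}" by simp
    finally show ?thesis using measure_EE_gt[OF lam t] by simp
  qed
  have "Fj \<alpha> c lam p j t = p *\<^sub>R (\<integral>x. Q True x \<partial>EE lam) + (1 - p) *\<^sub>R (\<integral>x. Q False x \<partial>EE lam)"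
    unfolding Fj_def Q_def by (rule Pm_decomp[OF lam p0 p1 measurable_Phi_Sig norm_Phi])
  also have "(\<integral>x. Q True x \<partial>EE lam) = (\<integral>x. indicator {t<..} x *\<^sub>R K + indicator {..t} x *\<^sub>R G x \<partial>EE lam)"
    by (rule integral_cong_AE[OF Qm _ QT]) simp
  also have "\<dots> = exp (- lam * t) *\<^sub>R K + (\<integral>x. indicator {..t} x *\<^sub>R G x \<partial>EE lam)"
    using iK iG intK by simp
  also have "(\<integral>x. Q False x \<partial>EE lam) = (\<integral>x. indicator {t<..} x *\<^sub>R K \<partial>EE lam)"
    by (rule integral_cong_AE[OF Qm _ QF]) simp
  also have "\<dots> = exp (- lam * t) *\<^sub>R K" by (rule intK)
  finally show ?thesis unfolding K_def G_def e_def
    by (simp add: algebra_simps scaleR_add_right)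
qed


lemma hk_int_bdd:
  fixes f :: "real \<Rightarrow> 'b::euclidean_space"
  assumes f[measurable]: "f \<in> borel_measurable borel" and B: "\<And>s. s \<in> {a..b} \<Longrightarrow> norm (f s) \<le> B"
  shows "f integrable_on {a..b}"
    "integral {a..b} f = (\<integral>s. indicator {a..b} s *\<^sub>R f s \<partial>lborel)"
proof -
  have "integrable lborel (\<lambda>s. indicator {a..b} s * B :: real)"
    by (intro integrable_mult_left integrable_real_indicator) (simp_all add: emeasure_lborel_Icc_eq)
  then have "set_integrable lborel {a..b} f"
    unfolding set_integrable_def
    by (rule Bochner_Integration.integrable_bound)
       (use B in \<open>auto simp: indicator_def intro: order_trans[OF _ abs_ge_self]\<close>)
  from set_borel_integral_eq_integral[OF this]
  show "f integrable_on {a..b}" "integral {a..b} f = (\<integral>s. indicator {a..b} s *\<^sub>R f s \<partial>lborel)"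
    by (simp_all add: set_lebesgue_integral_def)
qed

lemma integral_pow_rev:
  assumes t: "0 \<le> t"
  shows "integral {0..t} (\<lambda>x. (t - x) ^ n) = t ^ Suc n / real (Suc n)"
proof -
  define f where "f = (\<lambda>x::real. - ((t - x) ^ Suc n) / real (Suc n))"
  have "((\<lambda>x. (t - x) ^ n) has_integral (f t - f 0)) {0..t}"
  proof (rule fundamental_theorem_of_calculus[OF t])
    fix x :: real assume "x \<in> {0..t}"
    have "(f has_real_derivative (t - x) ^ n) (at x)"
      unfolding f_def by (auto intro!: derivative_eq_intros simp del: power_Suc)
    then show "(f has_vector_derivative (t - x) ^ n) (at x within {0..t})"
      by (simp add: has_real_derivative_iff_has_vector_derivative has_vector_derivative_at_within)
  qed
  then show ?thesis by (simp add: integral_unique f_def)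
qed

lemma volterra_unique:
  fixes D0 D1 :: "real \<Rightarrow> complex" and k M T :: real
  assumes k: "k \<ge> 0"
    and m0[measurable]: "D0 \<in> borel_measurable borel" and m1[measurable]: "D1 \<in> borel_measurable borel"
    and b0: "\<And>s. s \<in> {0..T} \<Longrightarrow> norm (D0 s) \<le> M" and b1: "\<And>s. s \<in> {0..T} \<Longrightarrow> norm (D1 s) \<le> M"
    and e0: "\<And>t. t \<in> {0..T} \<Longrightarrow> norm (D0 t) \<le> k * integral {0..t} (\<lambda>x. norm (D1 (t - x)))"
    and e1: "\<And>t. t \<in> {0..T} \<Longrightarrow> norm (D1 t) \<le> k * integral {0..t} (\<lambda>x. norm (D0 (t - x)))"
  shows "\<And>t. t \<in> {0..T} \<Longrightarrow> D0 t = 0 \<and> D1 t = 0"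
proof -
  have step: "norm (D' t) \<le> M * (k * t) ^ Suc n / fact (Suc n)"
    if D[measurable]: "D \<in> borel_measurable borel" and bD: "\<And>s. s \<in> {0..T} \<Longrightarrow> norm (D s) \<le> M"
      and IH: "\<And>s. s \<in> {0..T} \<Longrightarrow> norm (D s) \<le> M * (k * s) ^ n / fact n"
      and eq: "norm (D' t) \<le> k * integral {0..t} (\<lambda>x. norm (D (t - x)))"
      and t: "t \<in> {0..T}"
    for D D' :: "real \<Rightarrow> complex" and n t
  proof -
    have i1: "(\<lambda>x. norm (D (t - x))) integrable_on {0..t}"
      by (rule hk_int_bdd(1)[where B=M]) (use bD t in auto)
    have i2: "(\<lambda>x. M * (k * (t - x)) ^ n / fact n) integrable_on {0..t}"
      by (intro integrable_continuous_interval continuous_intros) simp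
    have "integral {0..t} (\<lambda>x. norm (D (t - x))) \<le> integral {0..t} (\<lambda>x. M * (k * (t - x)) ^ n / fact n)"
      by (rule integral_le[OF i1 i2]) (use IH t in auto)
    also have "\<dots> = integral {0..t} (\<lambda>x. (M * k ^ n / fact n) * (t - x) ^ n)"
      by (rule integral_cong) (simp add: power_mult_distrib)
    also have "\<dots> = (M * k ^ n / fact n) * (t ^ Suc n / Suc n)"
      using t by (simp add: integral_pow_rev)
    finally have I: "integral {0..t} (\<lambda>x. norm (D (t - x))) \<le> (M * k ^ n / fact n) * (t ^ Suc n / Suc n)" .
    have "k * integral {0..t} (\<lambda>x. norm (D (t - x))) \<le> k * ((M * k ^ n / fact n) * (t ^ Suc n / Suc n))"
      using I k by (rule mult_left_mono)
    also have "\<dots> = M * (k * t) ^ Suc n / fact (Suc n)"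
      by (simp add: power_mult_distrib field_simps)
    finally show ?thesis using eq by linarith
  qed
  have ind: "\<forall>s\<in>{0..T}. norm (D0 s) \<le> M * (k * s) ^ n / fact n \<and> norm (D1 s) \<le> M * (k * s) ^ n / fact n" for n
  proof (induction n)
    case 0 then show ?case using b0 b1 by simp
  next
    case (Suc n)
    have IH0: "\<And>s. s \<in> {0..T} \<Longrightarrow> norm (D0 s) \<le> M * (k * s) ^ n / fact n"
      and IH1: "\<And>s. s \<in> {0..T} \<Longrightarrow> norm (D1 s) \<le> M * (k * s) ^ n / fact n"
      using Suc.IH by auto
    show ?case
    proof
      fix s assume s: "s \<in> {0..T}"
      have a: "norm (D0 s) \<le> M * (k * s) ^ Suc n / fact (Suc n)"
        by (rule step[where D=D1 and D'=D0 and n=n and t=s, OF m1 b1 IH1 e0[OF s] s])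
      have b: "norm (D1 s) \<le> M * (k * s) ^ Suc n / fact (Suc n)"
        by (rule step[where D=D0 and D'=D1 and n=n and t=s, OF m0 b0 IH0 e1[OF s] s])
      show "norm (D0 s) \<le> M * (k * s) ^ Suc n / fact (Suc n) \<and> norm (D1 s) \<le> M * (k * s) ^ Suc n / fact (Suc n)"
        using a b by simp
    qed
  qed
  fix t assume t: "t \<in> {0..T}"
  have "(\<lambda>n. M * (inverse (fact n) * (k * t) ^ n)) \<longlonglongrightarrow> 0"
    by (rule tendsto_mult_right_zero[OF summable_LIMSEQ_zero[OF summable_exp]])
  moreover have "(\<lambda>n. M * (inverse (fact n) * (k * t) ^ n)) = (\<lambda>n. M * (k * t) ^ n / fact n)"
    by (simp add: field_simps)
  ultimately have lim: "(\<lambda>n. M * (k * t) ^ n / fact n) \<longlonglongrightarrow> 0" by simp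
  have "norm (D0 t) \<le> 0"
    by (rule LIMSEQ_le_const[OF lim]) (use ind t in auto)
  moreover have "norm (D1 t) \<le> 0"
    by (rule LIMSEQ_le_const[OF lim]) (use ind t in auto)
  ultimately show "D0 t = 0 \<and> D1 t = 0" by simp
qed


definition Cq :: "real \<Rightarrow> real \<Rightarrow> real" where
  "Cq q t = (if 0 < q then cosh (sqrt q * t) else if q < 0 then cos (sqrt (- q) * t) else 1)"

definition Sq :: "real \<Rightarrow> real \<Rightarrow> real" where
  "Sq q t = (if 0 < q then sinh (sqrt q * t) / sqrt q else if q < 0 then sin (sqrt (- q) * t) / sqrt (- q) else t)"

lemma Cq_deriv: "(Cq q has_real_derivative q * Sq q t) (at t)"
proof -
  consider "0 < q" | "q < 0" | "q = 0" by linarith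
  then show ?thesis
  proof cases
    case 1
    have s: "sqrt q * sqrt q = q" using 1 by simp
    have "((\<lambda>t. cosh (sqrt q * t)) has_real_derivative sinh (sqrt q * t) * sqrt q) (at t)"
      by (auto intro!: derivative_eq_intros)
    moreover have "sinh (sqrt q * t) * sqrt q = q * (sinh (sqrt q * t) / sqrt q)"
      using 1 s by (simp add: field_simps)
    ultimately show ?thesis using 1 unfolding Cq_def Sq_def by simp
  next
    case 2
    define s where "s = sqrt (-q)"
    have s0: "s > 0" using 2 by (simp add: s_def)
    have qs: "q = - (s * s)" using 2 by (simp add: s_def)
    have "((\<lambda>t. cos (sqrt (-q) * t)) has_real_derivative - sin (sqrt (-q) * t) * sqrt (-q)) (at t)"
      by (auto intro!: derivative_eq_intros)
    moreover have "- sin (s * t) * s = q * (sin (s * t) / s)"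
      unfolding qs using s0 by (simp add: field_simps)
    then have "- sin (sqrt (-q) * t) * sqrt (-q) = q * (sin (sqrt (-q) * t) / sqrt (-q))"
      by (simp add: s_def)
    ultimately show ?thesis using 2 unfolding Cq_def Sq_def by simp
  next
    case 3
    then show ?thesis unfolding Cq_def Sq_def by simp
  qed
qed

lemma Sq_deriv: "(Sq q has_real_derivative Cq q t) (at t)"
proof -
  consider "0 < q" | "q < 0" | "q = 0" by linarith
  then show ?thesis
  proof cases
    case 1
    have "((\<lambda>t. sinh (sqrt q * t)) has_real_derivative cosh (sqrt q * t) * sqrt q) (at t)"
      by (auto intro!: derivative_eq_intros)
    from DERIV_cdivide[OF this, of "sqrt q"]
    have "((\<lambda>t. sinh (sqrt q * t) / sqrt q) has_real_derivative cosh (sqrt q * t) * sqrt q / sqrt q) (at t)" .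
    moreover have "cosh (sqrt q * t) * sqrt q / sqrt q = cosh (sqrt q * t)" using 1 by simp
    ultimately show ?thesis using 1 unfolding Cq_def Sq_def by simp
  next
    case 2
    have "((\<lambda>t. sin (sqrt (-q) * t)) has_real_derivative cos (sqrt (-q) * t) * sqrt (-q)) (at t)"
      by (auto intro!: derivative_eq_intros)
    from DERIV_cdivide[OF this, of "sqrt (-q)"]
    have "((\<lambda>t. sin (sqrt (-q) * t) / sqrt (-q)) has_real_derivative cos (sqrt (-q) * t) * sqrt (-q) / sqrt (-q)) (at t)" .
    moreover have "cos (sqrt (-q) * t) * sqrt (-q) / sqrt (-q) = cos (sqrt (-q) * t)" using 2 by simp
    ultimately show ?thesis using 2 unfolding Cq_def Sq_def by simp
  next
    case 3
    then show ?thesis unfolding Cq_def Sq_def by (auto intro!: derivative_eq_intros)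
  qed
qed

lemma Cq_0[simp]: "Cq q 0 = 1" and Sq_0[simp]: "Sq q 0 = 0"
  by (simp_all add: Cq_def Sq_def)

lemma continuous_on_Cq[continuous_intros]: "continuous_on S (\<lambda>t. Cq q t)"
  using Cq_deriv by (meson DERIV_isCont continuous_at_imp_continuous_on)
lemma continuous_on_Sq[continuous_intros]: "continuous_on S (\<lambda>t. Sq q t)"
  using Sq_deriv by (meson DERIV_isCont continuous_at_imp_continuous_on)

definition Ac :: "real \<Rightarrow> real \<Rightarrow> real \<Rightarrow> complex" where
  "Ac k a t = complex_of_real (Cq (k\<^sup>2 - a\<^sup>2) t) + (complex_of_real k + \<i> * complex_of_real a) * complex_of_real (Sq (k\<^sup>2 - a\<^sup>2) t)"

lemma Ac_0[simp]: "Ac k a 0 = 1" by (simp add: Ac_def)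

lemma continuous_on_Ac: "continuous_on S (Ac k a)"
  unfolding Ac_def[abs_def] by (intro continuous_intros)

lemma Ac_deriv:
  "(Ac k a has_vector_derivative (\<i> * complex_of_real a * Ac k a t + complex_of_real k * Ac k (-a) t)) (at t within S)"
proof -
  let ?q = "k\<^sup>2 - a\<^sup>2"
  have "(Ac k a has_vector_derivative
      (complex_of_real (?q * Sq ?q t) + (complex_of_real k + \<i> * complex_of_real a) * complex_of_real (Cq ?q t))) (at t within S)"
    unfolding Ac_def[abs_def]
    by (rule has_vector_derivative_add[OF has_vector_derivative_of_real[OF has_field_derivative_at_within[OF Cq_deriv]]
        has_vector_derivative_mult_right[OF has_vector_derivative_of_real[OF has_field_derivative_at_within[OF Sq_deriv]]]])
  moreover have "complex_of_real (?q * Sq ?q t) + (complex_of_real k + \<i> * complex_of_real a) * complex_of_real (Cq ?q t)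
      = \<i> * complex_of_real a * Ac k a t + complex_of_real k * Ac k (-a) t"
    unfolding Ac_def by (simp add: algebra_simps power2_eq_square)
  ultimately show ?thesis by simp
qed

lemma cis_vd: "((\<lambda>x. cis (a * x)) has_vector_derivative (\<i> * complex_of_real a * cis (a * x))) (at x within S)"
proof -
  have "((\<lambda>x. a * x) has_derivative (\<lambda>h. a * h)) (at x within S)"
    by (rule has_derivative_mult_right[OF has_derivative_ident])
  from has_derivative_cis[OF this]
  have "((\<lambda>x. cis (a * x)) has_derivative (\<lambda>h. (a * h) *\<^sub>R (\<i> * cis (a * x)))) (at x within S)" .
  moreover have "(\<lambda>h. (a * h) *\<^sub>R (\<i> * cis (a * x))) = (\<lambda>h. h *\<^sub>R (\<i> * complex_of_real a * cis (a * x)))"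
    by (rule ext) (simp add: scaleR_conv_of_real algebra_simps)
  ultimately show ?thesis by (simp add: has_vector_derivative_def)
qed

lemma Ac_rev_vd:
  "((\<lambda>x. Ac k a (t - x)) has_vector_derivative
     (- (\<i> * complex_of_real a * Ac k a (t - x) + complex_of_real k * Ac k (-a) (t - x)))) (at x within S)"
proof -
  have f: "((\<lambda>x. t - x) has_vector_derivative (-1)) (at x within S)"
    using has_real_derivative_iff_has_vector_derivative[THEN iffD1, OF DERIV_diff[OF DERIV_const DERIV_ident]]
    by (simp add: has_vector_derivative_at_within)
  from vector_diff_chain_within[OF f Ac_deriv]
  show ?thesis by (simp add: o_def)
qed

lemma cand_int:
  assumes t: "0 \<le> t"
  shows "integral {0..t} (\<lambda>x. complex_of_real k * (cis (a * x) * Ac k (-a) (t - x))) = Ac k a t - cis (a * t)"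
proof -
  define H where "H = (\<lambda>x. - (cis (a * x) * Ac k a (t - x)))"
  have "((\<lambda>x. complex_of_real k * (cis (a * x) * Ac k (-a) (t - x))) has_integral (H t - H 0)) {0..t}"
  proof (rule fundamental_theorem_of_calculus[OF t])
    fix x :: real assume "x \<in> {0..t}"
    have "(H has_vector_derivative - (cis (a * x) * (- (\<i> * complex_of_real a * Ac k a (t - x) + complex_of_real k * Ac k (-a) (t - x)))
         + \<i> * complex_of_real a * cis (a * x) * Ac k a (t - x))) (at x within {0..t})"
      unfolding H_def by (rule has_vector_derivative_minus[OF has_vector_derivative_mult[OF cis_vd Ac_rev_vd]])
    moreover have "- (cis (a * x) * (- (\<i> * complex_of_real a * Ac k a (t - x) + complex_of_real k * Ac k (-a) (t - x)))
         + \<i> * complex_of_real a * cis (a * x) * Ac k a (t - x)) = complex_of_real k * (cis (a * x) * Ac k (-a) (t - x))"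
      by (simp add: algebra_simps)
    ultimately show "(H has_vector_derivative complex_of_real k * (cis (a * x) * Ac k (-a) (t - x))) (at x within {0..t})"
      by simp
  qed
  moreover have "H t - H 0 = Ac k a t - cis (a * t)" by (simp add: H_def)
  ultimately show ?thesis by (metis integral_unique)
qed

lemma continuous_on_Ac'[continuous_intros]: "continuous_on S f \<Longrightarrow> continuous_on S (\<lambda>x. Ac k a (f x))"
  by (rule continuous_on_compose2[OF continuous_on_Ac[of UNIV]]) auto


lemma EE_to_hk:
  fixes G :: "real \<Rightarrow> complex"
  assumes lam: "lam > 0" and t: "0 \<le> t" and G[measurable]: "G \<in> borel_measurable borel"
    and B: "\<And>x. norm (G x) \<le> B"
  shows "(\<integral>x. indicator {..t} x *\<^sub>R G x \<partial>EE lam) = integral {0..t} (\<lambda>x. (lam * exp (- lam * x)) *\<^sub>R G x)"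
proof -
  have "(\<integral>x. indicator {..t} x *\<^sub>R G x \<partial>EE lam) = (\<integral>x. exponential_density lam x *\<^sub>R (indicator {..t} x *\<^sub>R G x) \<partial>lborel)"
    by (rule integral_density) (auto simp: exponential_density_nonneg[OF lam])
  also have "\<dots> = (\<integral>x. indicator {0..t} x *\<^sub>R ((lam * exp (- lam * x)) *\<^sub>R G x) \<partial>lborel)"
    by (rule Bochner_Integration.integral_cong) (auto simp: exponential_density_def indicator_def mult.commute)
  also have "\<dots> = integral {0..t} (\<lambda>x. (lam * exp (- lam * x)) *\<^sub>R G x)"
  proof (rule hk_int_bdd(2)[symmetric, where B="lam * B"])
    fix s :: real assume "s \<in> {0..t}"
    then have e: "exp (- lam * s) \<le> 1" using lam by simp
    have "exp (- lam * s) * norm (G s) \<le> 1 * B"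
      by (rule mult_mono[OF e B]) auto
    then have "lam * (exp (- lam * s) * norm (G s)) \<le> lam * B"
      using lam by simp
    moreover have "norm ((lam * exp (- lam * s)) *\<^sub>R G s) = lam * (exp (- lam * s) * norm (G s))"
    proof -
      have "\<bar>lam * exp (- lam * s)\<bar> = lam * exp (- lam * s)" using lam by simp
      then show ?thesis by (simp only: norm_scaleR)
    qed
    ultimately show "norm ((lam * exp (- lam * s)) *\<^sub>R G s) \<le> lam * B" by linarith
  qed simp
  finally show ?thesis .
qed

lemma F_hk_gen:
  assumes c: "c > 0" and lam: "lam > 0" and p0: "0 \<le> p" and p1: "p \<le> 1" and t: "0 \<le> t"
    and hj: "fst (dvec j) + snd (dvec j) = 1"
    and hF: "fst (dvec (turn j False)) + snd (dvec (turn j False)) = -1"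
    and e: "fst (dvec j) - snd (dvec j) = \<epsilon>"
  shows "Fj \<alpha> c lam p j t = exp (- lam * t) *\<^sub>R cis ((\<epsilon> * (\<alpha> * c)) * t)
     + (lam * p) *\<^sub>R integral {0..t} (\<lambda>x. exp (- lam * x) *\<^sub>R (cis ((\<epsilon> * (\<alpha> * c)) * x) * Fj \<alpha> c lam p (turn j True) (t - x)))"
proof -
  define G where "G = (\<lambda>x. cis ((\<epsilon> * (\<alpha> * c)) * x) * Fj \<alpha> c lam p (turn j True) (t - x))"
  have Gm: "G \<in> borel_measurable borel"
  proof -
    have "(\<lambda>x::real. t - x) \<in> borel_measurable borel" by simp
    from measurable_compose[OF this measurable_Fj[OF lam]]
    have "(\<lambda>x. Fj \<alpha> c lam p (turn j True) (t - x)) \<in> borel_measurable borel" .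
    then show ?thesis unfolding G_def by measurable
  qed
  have GB: "norm (G x) \<le> 1" for x
    unfolding G_def using norm_Fj[OF lam] by (simp add: norm_mult)
  have "Fj \<alpha> c lam p j t = exp (- lam * t) *\<^sub>R cis (\<alpha> * c * t * (fst (dvec j) - snd (dvec j)))
     + p *\<^sub>R (\<integral>x. indicator {..t} x *\<^sub>R (cis (\<alpha> * c * x * (fst (dvec j) - snd (dvec j))) * Fj \<alpha> c lam p (turn j True) (t - x)) \<partial>EE lam)"
    by (rule Fj_rec[OF c lam p0 p1 t hj hF])
  also have "(\<lambda>x. cis (\<alpha> * c * x * (fst (dvec j) - snd (dvec j))) * Fj \<alpha> c lam p (turn j True) (t - x)) = G"
    unfolding G_def e by (simp add: ac_simps)
  also have "cis (\<alpha> * c * t * (fst (dvec j) - snd (dvec j))) = cis ((\<epsilon> * (\<alpha> * c)) * t)"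
    unfolding e by (simp add: ac_simps)
  also have "(\<integral>x. indicator {..t} x *\<^sub>R G x \<partial>EE lam) = integral {0..t} (\<lambda>x. (lam * exp (- lam * x)) *\<^sub>R G x)"
    by (rule EE_to_hk[OF lam t Gm GB])
  also have "integral {0..t} (\<lambda>x. (lam * exp (- lam * x)) *\<^sub>R G x) = lam *\<^sub>R integral {0..t} (\<lambda>x. exp (- lam * x) *\<^sub>R G x)"
    by (simp add: integral_cmul[symmetric] scaleR_scaleR)
  finally show ?thesis unfolding G_def by (simp add: scaleR_scaleR mult.commute)
qed

lemma dvec_m1: "dvec (-1) = (0, -1)"
  by (subst dvec_mod) (simp add: dvec_3)

lemma F0_hk:
  assumes c: "c > 0" and lam: "lam > 0" and p0: "0 \<le> p" and p1: "p \<le> 1" and t: "0 \<le> t"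
  shows "Fj \<alpha> c lam p 0 t = exp (- lam * t) *\<^sub>R cis ((\<alpha> * c) * t)
     + (lam * p) *\<^sub>R integral {0..t} (\<lambda>x. exp (- lam * x) *\<^sub>R (cis ((\<alpha> * c) * x) * Fj \<alpha> c lam p 1 (t - x)))"
  using F_hk_gen[OF c lam p0 p1 t, of 0 1 \<alpha>] by (simp add: dvec_0 dvec_m1 turn_def)

lemma F1_hk:
  assumes c: "c > 0" and lam: "lam > 0" and p0: "0 \<le> p" and p1: "p \<le> 1" and t: "0 \<le> t"
  shows "Fj \<alpha> c lam p 1 t = exp (- lam * t) *\<^sub>R cis ((- (\<alpha> * c)) * t)
     + (lam * p) *\<^sub>R integral {0..t} (\<lambda>x. exp (- lam * x) *\<^sub>R (cis ((- (\<alpha> * c)) * x) * Fj \<alpha> c lam p 0 (t - x)))"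
  using F_hk_gen[OF c lam p0 p1 t, of 1 "-1" \<alpha>] by (simp add: dvec_1 dvec_2 turn_def)


definition Gc :: "real \<Rightarrow> real \<Rightarrow> real \<Rightarrow> real \<Rightarrow> complex" where
  "Gc lam k a t = exp (- lam * t) *\<^sub>R Ac k a t"

lemma continuous_on_Gc: "continuous_on S (Gc lam k a)"
  unfolding Gc_def[abs_def] by (intro continuous_intros continuous_on_Ac)

lemma continuous_on_Gc'[continuous_intros]: "continuous_on S f \<Longrightarrow> continuous_on S (\<lambda>x. Gc lam k a (f x))"
  by (rule continuous_on_compose2[OF continuous_on_Gc[of UNIV]]) auto

lemma G_eq:
  assumes t: "0 \<le> t"
  shows "Gc lam k a t = exp (- lam * t) *\<^sub>R cis (a * t)
     + k *\<^sub>R integral {0..t} (\<lambda>x. exp (- lam * x) *\<^sub>R (cis (a * x) * Gc lam k (-a) (t - x)))"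
proof -
  have "integral {0..t} (\<lambda>x. exp (- lam * x) *\<^sub>R (cis (a * x) * Gc lam k (-a) (t - x)))
      = integral {0..t} (\<lambda>x. exp (- lam * t) *\<^sub>R (cis (a * x) * Ac k (-a) (t - x)))"
  proof (rule integral_cong)
    fix x :: real
    have "exp (- lam * x) * exp (- lam * (t - x)) = exp (- lam * t)"
      by (simp add: exp_add[symmetric] algebra_simps)
    then show "exp (- lam * x) *\<^sub>R (cis (a * x) * Gc lam k (-a) (t - x)) = exp (- lam * t) *\<^sub>R (cis (a * x) * Ac k (-a) (t - x))"
      unfolding Gc_def by (simp add: scaleR_conv_of_real algebra_simps flip: of_real_mult)
  qed
  also have "\<dots> = exp (- lam * t) *\<^sub>R integral {0..t} (\<lambda>x. cis (a * x) * Ac k (-a) (t - x))"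
    by simp
  finally have "k *\<^sub>R integral {0..t} (\<lambda>x. exp (- lam * x) *\<^sub>R (cis (a * x) * Gc lam k (-a) (t - x)))
     = exp (- lam * t) *\<^sub>R (k *\<^sub>R integral {0..t} (\<lambda>x. cis (a * x) * Ac k (-a) (t - x)))"
    by (simp add: scaleR_scaleR mult.commute)
  also have "k *\<^sub>R integral {0..t} (\<lambda>x. cis (a * x) * Ac k (-a) (t - x)) = Ac k a t - cis (a * t)"
  proof -
    have "k *\<^sub>R integral {0..t} (\<lambda>x. cis (a * x) * Ac k (-a) (t - x))
        = integral {0..t} (\<lambda>x. complex_of_real k * (cis (a * x) * Ac k (-a) (t - x)))"
      by (simp add: integral_cmul[symmetric] scaleR_conv_of_real del: integral_cmul)
    then show ?thesis using cand_int[OF t, of k a] by simp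
  qed
  finally show ?thesis unfolding Gc_def by (simp add: algebra_simps)
qed

lemma cont_bdd:
  fixes f :: "real \<Rightarrow> 'b::real_normed_vector"
  assumes "continuous_on {0..T} f"
  obtains B where "\<And>s. s \<in> {0..T} \<Longrightarrow> norm (f s) \<le> B"
proof -
  have "bounded (f ` {0..T})" by (intro compact_imp_bounded compact_continuous_image assms) simp
  then obtain B where "\<forall>y\<in>f ` {0..T}. norm y \<le> B" using bounded_iff by blast
  then show ?thesis using that by blast
qed

lemma F_eq_G:
  assumes c: "c > 0" and lam: "lam > 0" and p0: "0 \<le> p" and p1: "p \<le> 1" and T: "0 \<le> T"
  shows "Fj \<alpha> c lam p 0 T = Gc lam (lam * p) (\<alpha> * c) T \<and> Fj \<alpha> c lam p 1 T = Gc lam (lam * p) (- (\<alpha> * c)) T"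
proof -
  define k where "k = lam * p"
  define a where "a = \<alpha> * c"
  have k: "k \<ge> 0" using lam p0 by (simp add: k_def)
  define F0 where "F0 = (\<lambda>s. Fj \<alpha> c lam p 0 s)"
  define F1 where "F1 = (\<lambda>s. Fj \<alpha> c lam p 1 s)"
  define G0 where "G0 = Gc lam k a"
  define G1 where "G1 = Gc lam k (-a)"
  define D0 where "D0 = (\<lambda>s. F0 s - G0 s)"
  define D1 where "D1 = (\<lambda>s. F1 s - G1 s)"
  have F0m[measurable]: "F0 \<in> borel_measurable borel" unfolding F0_def by (rule measurable_Fj[OF lam])
  have F1m[measurable]: "F1 \<in> borel_measurable borel" unfolding F1_def by (rule measurable_Fj[OF lam])
  have G0m[measurable]: "G0 \<in> borel_measurable borel" unfolding G0_def by (rule borel_measurable_continuous_onI[OF continuous_on_Gc])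
  have G1m[measurable]: "G1 \<in> borel_measurable borel" unfolding G1_def by (rule borel_measurable_continuous_onI[OF continuous_on_Gc])
  have D0m[measurable]: "D0 \<in> borel_measurable borel" unfolding D0_def by measurable
  have D1m[measurable]: "D1 \<in> borel_measurable borel" unfolding D1_def by measurable
  have F0b: "norm (F0 s) \<le> 1" for s unfolding F0_def by (rule norm_Fj[OF lam])
  have F1b: "norm (F1 s) \<le> 1" for s unfolding F1_def by (rule norm_Fj[OF lam])
  obtain B0 where B0: "\<And>s. s \<in> {0..T} \<Longrightarrow> norm (G0 s) \<le> B0"
    using cont_bdd[OF continuous_on_Gc] unfolding G0_def by blast
  obtain B1 where B1: "\<And>s. s \<in> {0..T} \<Longrightarrow> norm (G1 s) \<le> B1"
    using cont_bdd[OF continuous_on_Gc] unfolding G1_def by blast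
  define M where "M = 1 + B0 + B1"
  have B0p: "0 \<le> B0" using B0[of 0] T by (meson atLeastAtMost_iff norm_ge_zero order_trans order_refl)
  have B1p: "0 \<le> B1" using B1[of 0] T by (meson atLeastAtMost_iff norm_ge_zero order_trans order_refl)
  have D0b: "norm (D0 s) \<le> M" if "s \<in> {0..T}" for s
    using norm_triangle_ineq4[of "F0 s" "G0 s"] F0b[of s] B0[OF that] B1p unfolding D0_def M_def by linarith
  have D1b: "norm (D1 s) \<le> M" if "s \<in> {0..T}" for s
    using norm_triangle_ineq4[of "F1 s" "G1 s"] F1b[of s] B1[OF that] B0p unfolding D1_def M_def by linarith
  have key: "norm (F s - G s) \<le> k * integral {0..s} (\<lambda>x. norm (F' (s - x) - G' (s - x)))"
    if s: "s \<in> {0..T}"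
      and eF: "F s = exp (- lam * s) *\<^sub>R cis (b * s) + k *\<^sub>R integral {0..s} (\<lambda>x. exp (- lam * x) *\<^sub>R (cis (b * x) * F' (s - x)))"
      and eG: "G s = exp (- lam * s) *\<^sub>R cis (b * s) + k *\<^sub>R integral {0..s} (\<lambda>x. exp (- lam * x) *\<^sub>R (cis (b * x) * G' (s - x)))"
      and F'm: "F' \<in> borel_measurable borel" and F'b: "\<And>y. norm (F' y) \<le> 1"
      and G'c: "continuous_on UNIV G'"
      and D'b: "\<And>y. y \<in> {0..T} \<Longrightarrow> norm (F' y - G' y) \<le> M"
    for F G F' G' :: "real \<Rightarrow> complex" and s b
  proof -
    have sub: "(\<lambda>x. s - x) \<in> borel_measurable borel" by simp
    have F'sm: "(\<lambda>x. F' (s - x)) \<in> borel_measurable borel"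
      using measurable_compose[OF sub F'm] by simp
    have G'sm: "(\<lambda>x. G' (s - x)) \<in> borel_measurable borel"
      using measurable_compose[OF sub borel_measurable_continuous_onI[OF G'c]] by simp
    have iF: "(\<lambda>x. exp (- lam * x) *\<^sub>R (cis (b * x) * F' (s - x))) integrable_on {0..s}"
    proof (rule hk_int_bdd(1)[where B=1])
      show "(\<lambda>x. exp (- lam * x) *\<^sub>R (cis (b * x) * F' (s - x))) \<in> borel_measurable borel"
        using F'sm by measurable
    next
      fix x assume "x \<in> {0..s}"
      then have e: "exp (- lam * x) \<le> 1" using lam by simp
      have "exp (- lam * x) * norm (F' (s - x)) \<le> 1"
        by (rule mult_le_one[OF e]) (use F'b in auto)
      then show "norm (exp (- lam * x) *\<^sub>R (cis (b * x) * F' (s - x))) \<le> 1"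
        by (simp add: norm_mult)
    qed
    have iG: "(\<lambda>x. exp (- lam * x) *\<^sub>R (cis (b * x) * G' (s - x))) integrable_on {0..s}"
      by (intro integrable_continuous_interval continuous_intros continuous_on_compose2[OF G'c]) auto
    have "F s - G s = k *\<^sub>R (integral {0..s} (\<lambda>x. exp (- lam * x) *\<^sub>R (cis (b * x) * F' (s - x)))
                       - integral {0..s} (\<lambda>x. exp (- lam * x) *\<^sub>R (cis (b * x) * G' (s - x))))"
      using eF eG by (simp add: algebra_simps)
    also have "\<dots> = k *\<^sub>R integral {0..s} (\<lambda>x. exp (- lam * x) *\<^sub>R (cis (b * x) * (F' (s - x) - G' (s - x))))"
      by (subst integral_diff[OF iF iG, symmetric]) (simp add: algebra_simps)
    finally have eq: "F s - G s = \<dots>" .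
    have iN: "(\<lambda>x. norm (F' (s - x) - G' (s - x))) integrable_on {0..s}"
    proof (rule hk_int_bdd(1)[where B=M])
      show "(\<lambda>x. norm (F' (s - x) - G' (s - x))) \<in> borel_measurable borel"
        using F'sm G'sm by measurable
    next
      fix x assume "x \<in> {0..s}"
      then have "s - x \<in> {0..T}" using s by auto
      then show "norm (norm (F' (s - x) - G' (s - x))) \<le> M" using D'b by simp
    qed
    have "norm (integral {0..s} (\<lambda>x. exp (- lam * x) *\<^sub>R (cis (b * x) * (F' (s - x) - G' (s - x)))))
        \<le> integral {0..s} (\<lambda>x. norm (F' (s - x) - G' (s - x)))"
    proof (rule Henstock_Kurzweil_Integration.integral_norm_bound_integral[OF _ iN])
      show "(\<lambda>x. exp (- lam * x) *\<^sub>R (cis (b * x) * (F' (s - x) - G' (s - x)))) integrable_on {0..s}"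
        using integrable_diff[OF iF iG] by (simp add: algebra_simps)
    next
      fix x assume "x \<in> {0..s}"
      then have e: "exp (- lam * x) \<le> 1" using lam by simp
      have "exp (- lam * x) * norm (F' (s - x) - G' (s - x)) \<le> 1 * norm (F' (s - x) - G' (s - x))"
        by (rule mult_right_mono[OF e]) simp
      then show "norm (exp (- lam * x) *\<^sub>R (cis (b * x) * (F' (s - x) - G' (s - x)))) \<le> norm (F' (s - x) - G' (s - x))"
        by (simp add: norm_mult)
    qed
    then show ?thesis unfolding eq using k by (simp add: mult_left_mono)
  qed
  have e0: "norm (D0 s) \<le> k * integral {0..s} (\<lambda>x. norm (D1 (s - x)))" if s: "s \<in> {0..T}" for s
    unfolding D0_def D1_def
  proof (rule key[OF s, where b=a])
    show "F0 s = exp (- lam * s) *\<^sub>R cis (a * s) + k *\<^sub>R integral {0..s} (\<lambda>x. exp (- lam * x) *\<^sub>R (cis (a * x) * F1 (s - x)))"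
      unfolding F0_def F1_def k_def a_def using F0_hk[OF c lam p0 p1, of s \<alpha>] s by simp
    show "G0 s = exp (- lam * s) *\<^sub>R cis (a * s) + k *\<^sub>R integral {0..s} (\<lambda>x. exp (- lam * x) *\<^sub>R (cis (a * x) * G1 (s - x)))"
      unfolding G0_def G1_def using G_eq[of s lam k a] s by simp
  qed (use F1m F1b D1b in \<open>auto simp: D1_def G1_def intro: continuous_on_Gc\<close>)
  have e1: "norm (D1 s) \<le> k * integral {0..s} (\<lambda>x. norm (D0 (s - x)))" if s: "s \<in> {0..T}" for s
    unfolding D0_def D1_def
  proof (rule key[OF s, where b="-a"])
    show "F1 s = exp (- lam * s) *\<^sub>R cis ((-a) * s) + k *\<^sub>R integral {0..s} (\<lambda>x. exp (- lam * x) *\<^sub>R (cis ((-a) * x) * F0 (s - x)))"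
      unfolding F0_def F1_def k_def a_def using F1_hk[OF c lam p0 p1, of s \<alpha>] s by simp
    show "G1 s = exp (- lam * s) *\<^sub>R cis ((-a) * s) + k *\<^sub>R integral {0..s} (\<lambda>x. exp (- lam * x) *\<^sub>R (cis ((-a) * x) * G0 (s - x)))"
      unfolding G0_def G1_def using G_eq[of s lam k "-a"] s by simp
  qed (use F0m F0b D0b in \<open>auto simp: D0_def G0_def intro: continuous_on_Gc\<close>)
  have "D0 T = 0 \<and> D1 T = 0"
    by (rule volterra_unique[OF k D0m D1m D0b D1b e0 e1]) (use T in auto)
  then show ?thesis unfolding D0_def D1_def F0_def F1_def G0_def G1_def k_def a_def by simp
qed


lemma bracket_eq:
  "bracket k t (csqrt (complex_of_real q)) = 2 * complex_of_real (Cq q t) + 2 * complex_of_real k * complex_of_real (Sq q t)"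
proof -
  consider "0 < q" | "q < 0" | "q = 0" by linarith
  then show ?thesis
  proof cases
    case 1
    define s where "s = sqrt q"
    have s0: "s > 0" using 1 by (simp add: s_def)
    have cs: "csqrt (complex_of_real q) = complex_of_real s" using 1 by (simp add: csqrt_of_real s_def)
    have r: "(1 + k / s) * exp (t * s) + (1 - k / s) * exp (- t * s) = 2 * cosh (s * t) + 2 * k * (sinh (s * t) / s)"
      using s0 by (simp add: cosh_def sinh_def field_simps mult.commute)
    have "bracket k t (csqrt (complex_of_real q)) = complex_of_real ((1 + k / s) * exp (t * s) + (1 - k / s) * exp (- t * s))"
      unfolding bracket_def cs using s0 by (simp add: exp_of_real[symmetric])
    also have "\<dots> = complex_of_real (2 * cosh (s * t) + 2 * k * (sinh (s * t) / s))" by (simp only: r)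
    finally show ?thesis using 1 by (simp add: Cq_def Sq_def s_def)
  next
    case 2
    define w where "w = sqrt (- q)"
    have w0: "w > 0" using 2 by (simp add: w_def)
    have cs: "csqrt (complex_of_real q) = \<i> * complex_of_real w"
      using 2 by (simp add: csqrt_of_real' w_def)
    have e1: "exp (complex_of_real t * (\<i> * complex_of_real w)) = Complex (cos (t * w)) (sin (t * w))"
      using cis_conv_exp[of "t * w"] by (simp add: cis.code mult.commute mult.left_commute)
    have e2: "exp (- complex_of_real t * (\<i> * complex_of_real w)) = Complex (cos (t * w)) (- sin (t * w))"
      using cis_conv_exp[of "- (t * w)"] by (simp add: cis.code mult.commute mult.left_commute)
    have "bracket k t (csqrt (complex_of_real q)) =
        (1 + complex_of_real k / (\<i> * complex_of_real w)) * Complex (cos (t * w)) (sin (t * w)) +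
        (1 - complex_of_real k / (\<i> * complex_of_real w)) * Complex (cos (t * w)) (- sin (t * w))"
      unfolding bracket_def cs e1[symmetric] e2[symmetric] using w0 by simp
    also have "\<dots> = complex_of_real (2 * cos (w * t) + 2 * k * (sin (w * t) / w))"
      using w0 by (simp add: complex_eq_iff field_simps mult.commute)
    finally show ?thesis using 2 by (simp add: Cq_def Sq_def w_def)
  next
    case 3
    then show ?thesis by (simp add: bracket_def Cq_def Sq_def)
  qed
qed

lemma orth_space_eq: "orth_space lam p = measure_pmf (pmf_of_set {0..<4::nat}) \<Otimes>\<^sub>M Pm lam p"
  unfolding orth_space_def Pm_def ..

lemma Fj_sum:
  assumes c: "c > 0" and lam: "lam > 0" and p0: "0 \<le> p" and p1: "p \<le> 1" and t: "0 < t"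
  shows "(\<integral>\<omega>. Phi \<alpha> c (int (fst \<omega>)) (snd \<omega>) t \<partial>orth_space lam p)
      = (1/4) *\<^sub>R (Fj \<alpha> c lam p 0 t + Fj \<alpha> c lam p 1 t)"
proof -
  let ?P4 = "measure_pmf (pmf_of_set {0..<4::nat})"
  interpret Pp: prob_space "Pm lam p" by (rule prob_space_Pm[OF lam])
  interpret P: pair_sigma_finite ?P4 "Pm lam p" ..
  interpret PP: prob_space "?P4 \<Otimes>\<^sub>M Pm lam p" by (rule prob_space_pair) unfold_locales
  have fstm: "fst \<in> measurable (?P4 \<Otimes>\<^sub>M Pm lam p) (count_space UNIV)"
  proof -
    have "fst \<in> measurable (?P4 \<Otimes>\<^sub>M Pm lam p) ?P4" by (rule measurable_fst)
    then show ?thesis by (simp add: measurable_cong_sets[OF refl sets_measure_pmf_count_space])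
  qed
  have fm: "(\<lambda>\<omega>. Phi \<alpha> c (int d) (snd \<omega>) t) \<in> borel_measurable (?P4 \<Otimes>\<^sub>M Pm lam p)" if "d \<in> UNIV" for d
    by (rule measurable_compose[OF measurable_snd measurable_Phi_Pm])
  have hm: "(\<lambda>\<omega>. (\<lambda>d \<omega>. Phi \<alpha> c (int d) (snd \<omega>) t) (fst \<omega>) \<omega>) \<in> borel_measurable (?P4 \<Otimes>\<^sub>M Pm lam p)"
    by (rule measurable_compose_countable'[OF fm fstm countableI_type])
  have "(\<integral>\<omega>. Phi \<alpha> c (int (fst \<omega>)) (snd \<omega>) t \<partial>orth_space lam p)
      = (\<integral>d. (\<integral>\<omega>. Phi \<alpha> c (int d) \<omega> t \<partial>Pm lam p) \<partial>?P4)"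
    unfolding orth_space_eq
    by (rule P.integral_fst'[symmetric, where f="\<lambda>\<omega>. Phi \<alpha> c (int (fst \<omega>)) (snd \<omega>) t", simplified],
        rule PP.integrable_const_bound[where B=1]) (use hm in \<open>simp_all add: norm_Phi\<close>)
  also have "\<dots> = (\<Sum>d\<in>{0..<4}. pmf (pmf_of_set {0..<4::nat}) d *\<^sub>R Fj \<alpha> c lam p (int d) t)"
    unfolding Fj_def by (rule integral_measure_pmf) auto
  also have "\<dots> = (1/4) *\<^sub>R (Fj \<alpha> c lam p 0 t + Fj \<alpha> c lam p 1 t + Fj \<alpha> c lam p 2 t + Fj \<alpha> c lam p 3 t)"
  proof -
    have "{0..<4::nat} = {0,1,2,3}" by auto
    then show ?thesis by (simp add: scaleR_add_right)
  qed
  also have "Fj \<alpha> c lam p 2 t = 0" by (rule Fj_bad[OF c lam t]) (simp add: dvec_2)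
  also have "Fj \<alpha> c lam p 3 t = 0" by (rule Fj_bad[OF c lam t]) (simp add: dvec_3)
  finally show ?thesis by simp
qed

theorem mainTheorem6:
  fixes lam c p \<alpha> t :: real
  assumes "lam > 0" and "c > 0" and "0 < p" and "p < 1" and "t > 0"
  shows "(LINT \<omega>|orth_space lam p.
            indicator {\<omega>. posX c \<omega> t + posY c \<omega> t = c * t} \<omega>
              *\<^sub>R cis (\<alpha> * (posX c \<omega> t - posY c \<omega> t)))
         = complex_of_real (exp (- lam * t) / 4)
           * bracket (lam * p) t (csqrt (complex_of_real (lam\<^sup>2 * p\<^sup>2 - \<alpha>\<^sup>2 * c\<^sup>2)))"
proof -
  note lam = assms(1) and c = assms(2) and p0 = less_imp_le[OF assms(3)] and p1 = less_imp_le[OF assms(4)] and t = assms(5)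
  define k where "k = lam * p"
  define a where "a = \<alpha> * c"
  define q where "q = k\<^sup>2 - a\<^sup>2"
  have q: "lam\<^sup>2 * p\<^sup>2 - \<alpha>\<^sup>2 * c\<^sup>2 = q" by (simp add: q_def k_def a_def power_mult_distrib)
  have "(LINT \<omega>|orth_space lam p.
            indicator {\<omega>. posX c \<omega> t + posY c \<omega> t = c * t} \<omega>
              *\<^sub>R cis (\<alpha> * (posX c \<omega> t - posY c \<omega> t)))
      = (\<integral>\<omega>. Phi \<alpha> c (int (fst \<omega>)) (snd \<omega>) t \<partial>orth_space lam p)"
    by (simp only: orth_integrand_eq)
  also have "\<dots> = (1/4) *\<^sub>R (Fj \<alpha> c lam p 0 t + Fj \<alpha> c lam p 1 t)"
    by (rule Fj_sum[OF c lam p0 p1 t])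
  also have "Fj \<alpha> c lam p 0 t + Fj \<alpha> c lam p 1 t = Gc lam k a t + Gc lam k (-a) t"
    using F_eq_G[OF c lam p0 p1, of t \<alpha>] t by (simp add: k_def a_def)
  also have "Gc lam k a t + Gc lam k (-a) t = exp (- lam * t) *\<^sub>R (2 * complex_of_real (Cq q t) + 2 * complex_of_real k * complex_of_real (Sq q t))"
    unfolding Gc_def Ac_def q_def by (simp add: algebra_simps)
  also have "2 * complex_of_real (Cq q t) + 2 * complex_of_real k * complex_of_real (Sq q t) = bracket k t (csqrt (complex_of_real q))"
    by (rule bracket_eq[symmetric])
  finally show ?thesis unfolding q k_def
    by (simp add: scaleR_conv_of_real)
qed


end
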